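(* Let $X$ be a finite alphabet with at least two letters, $k\ge2$, $\mathcal M$ an automaton over $X$, $A:C_{\mathcal M}\to\bar k$, and $(F,c)\in\mathcal F_{\mathcal T_k}$. If $F\le_h(C_{\mathcal M};\le_0,\le_1,A)$, then $B\le_{CA}A\circ f_{\mathcal M}$ for every $B\in\mathbf\Sigma(F)$.
   Context: $f_{\mathcal M}(\xi)$ is the set of states visited infinitely often on input $\xi$; $C_{\mathcal M}=\{f_{\mathcal M}(\xi):\xi\in X^\omega\}$; $c\le_0 d$ iff the states of $d$ are reachable from those of $c$; $c\le_1d$ iff $c\supseteq d$; $[c]_0$ is the $\equiv_0$-class of $c$. Forests: finite $F\subseteq\omega^+$ closed under nonempty prefixes (prefix order); trees: finite prefix-closed $V\subseteq\omega^*$; $\mathcal F_{\mathcal T_k}$: forests labeled by $\bar k$-labeled trees $(V,v)$. $F\le_h(C_{\mathcal M};\le_0,\le_1,A)$ means: there is a monotone $\varphi:(F,\sqsubseteq)\to(C_{\mathcal M};\le_0)$ such that for every $\tau\in F$ with $c(\tau)=(V,v)$ there is a monotone $\psi:(V,\sqsubseteq)\to([\varphi(\tau)]_0;\le_1)$ with $v(\sigma)=A(\psi(\sigma))$ for all $\sigma\in V$. $B\le_{CA}D$ iff $B=D\circ g$ for a continuous $g:X^\omega\to X^\omega$. $\mathbf\Sigma(F)$: the set of $k$-partitions determined by some $F$-family over the 2-base $(\mathbf\Sigma^0_1,\mathbf\Sigma^0_2)$ (open sets, countable unions of closed sets), where an $F$-family is $\{U_\tau\}_{\tau\in F}$ open,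 $U_{\tau i}\subseteq U_\tau$, $\bigcup U_\tau=X^\omega$, plus for each $\tau$ with $c(\tau)=(V,v)$ sets $U_{\tau\sigma}=\tilde U_\tau\cap B_{\tau\sigma}$, $B_{\tau\sigma}\in\mathbf\Sigma^0_2$, $U_{\tau\sigma i}\subseteq U_{\tau\sigma}$, $\bigcup_\sigma U_{\tau\sigma}=\tilde U_\tau$ (with $\tilde U_\tau=U_\tau\setminus\bigcup_{\tau i\in F}U_{\tau i}$), and it determines $B$ if $B(x)=v(\sigma)$ whenever $x\in U_{\tau\sigma}\setminus\bigcup_{\sigma i\in V}U_{\tau\sigma i}$. *)

theory Defs
  imports Main "HOL-Library.Sublist"
begin

definition open_w :: "(nat \<Rightarrow> 'x) set \<Rightarrow> bool" where
  "open_w U \<longleftrightarrow> (\<forall>\<xi>\<in>U. \<exists>n. \<forall>\<eta>. (\<forall>i<n. \<eta> i = \<xi> i) \<longrightarrow> \<eta> \<in> U)"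

definition closed_w :: "(nat \<Rightarrow> 'x) set \<Rightarrow> bool" where
  "closed_w U \<longleftrightarrow> open_w (- U)"

definition Sigma02 :: "(nat \<Rightarrow> 'x) set set" where
  "Sigma02 = {S. \<exists>Cs :: nat \<Rightarrow> (nat \<Rightarrow> 'x) set. (\<forall>n. closed_w (Cs n)) \<and> S = \<Union>(range Cs)}"

definition cont_w :: "((nat \<Rightarrow> 'x) \<Rightarrow> (nat \<Rightarrow> 'y)) \<Rightarrow> bool" where
  "cont_w g \<longleftrightarrow> (\<forall>\<xi> n. \<exists>m. \<forall>\<eta>. (\<forall>i<m. \<eta> i = \<xi> i) \<longrightarrow> (\<forall>i<n. g \<eta> i = g \<xi> i))"

definition le_CA :: "((nat \<Rightarrow> 'x) \<Rightarrow> 'a) \<Rightarrow> ((nat \<Rightarrow> 'x) \<Rightarrow> 'a) \<Rightarrow> bool" where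
  "le_CA B D \<longleftrightarrow> (\<exists>g :: (nat \<Rightarrow> 'x) \<Rightarrow> (nat \<Rightarrow> 'x). cont_w g \<and> B = D \<circ> g)"

fun run :: "('q \<Rightarrow> 'x \<Rightarrow> 'q) \<Rightarrow> 'q \<Rightarrow> (nat \<Rightarrow> 'x) \<Rightarrow> nat \<Rightarrow> 'q" where
  "run \<delta> q0 \<xi> 0 = q0"
| "run \<delta> q0 \<xi> (Suc n) = \<delta> (run \<delta> q0 \<xi> n) (\<xi> n)"

definition fM :: "('q \<Rightarrow> 'x \<Rightarrow> 'q) \<Rightarrow> 'q \<Rightarrow> (nat \<Rightarrow> 'x) \<Rightarrow> 'q set" where
  "fM \<delta> q0 \<xi> = {q. \<exists>\<^sub>\<infinity>n. run \<delta> q0 \<xi> n = q}"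

definition CM :: "('q \<Rightarrow> 'x \<Rightarrow> 'q) \<Rightarrow> 'q \<Rightarrow> 'q set set" where
  "CM \<delta> q0 = range (fM \<delta> q0)"

definition reach :: "('q \<Rightarrow> 'x \<Rightarrow> 'q) \<Rightarrow> 'q \<Rightarrow> 'q \<Rightarrow> bool" where
  "reach \<delta> p q \<longleftrightarrow> (p, q) \<in> {(a, \<delta> a x) | a x. True}\<^sup>*"

definition le0 :: "('q \<Rightarrow> 'x \<Rightarrow> 'q) \<Rightarrow> 'q set \<Rightarrow> 'q set \<Rightarrow> bool" where
  "le0 \<delta> c d \<longleftrightarrow> (\<forall>q\<in>d. \<exists>p\<in>c. reach \<delta> p q)"

definition eq0 :: "('q \<Rightarrow> 'x \<Rightarrow> 'q) \<Rightarrow> 'q set \<Rightarrow> 'q set \<Rightarrow> bool" where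
  "eq0 \<delta> c d \<longleftrightarrow> le0 \<delta> c d \<and> le0 \<delta> d c"

definition cls0 :: "('q \<Rightarrow> 'x \<Rightarrow> 'q) \<Rightarrow> 'q \<Rightarrow> 'q set \<Rightarrow> 'q set set" where
  "cls0 \<delta> q0 c = {d \<in> CM \<delta> q0. eq0 \<delta> c d}"

definition is_forest :: "nat list set \<Rightarrow> bool" where
  "is_forest F \<longleftrightarrow> finite F \<and> [] \<notin> F \<and>
     (\<forall>\<tau> \<sigma>. \<tau> @ \<sigma> \<in> F \<longrightarrow> \<tau> \<noteq> [] \<longrightarrow> \<tau> \<in> F)"

definition is_tree :: "nat list set \<Rightarrow> bool" where
  "is_tree V \<longleftrightarrow> finite V \<and> (\<forall>\<tau> \<sigma>. \<tau> @ \<sigma> \<in> V \<longrightarrow> \<tau> \<in> V)"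

text \<open>(F,c) \<in> F_{T_k}: c assigns to each node a \<bar>k-labeled tree (V,v).\<close>
definition labeled_forest ::
  "nat \<Rightarrow> nat list set \<Rightarrow> (nat list \<Rightarrow> nat list set \<times> (nat list \<Rightarrow> nat)) \<Rightarrow> bool" where
  "labeled_forest k F c \<longleftrightarrow> is_forest F \<and>
     (\<forall>\<tau>\<in>F. is_tree (fst (c \<tau>)) \<and> (\<forall>\<sigma>\<in>fst (c \<tau>). snd (c \<tau>) \<sigma> < k))"

definition h_red ::
  "nat list set \<Rightarrow> (nat list \<Rightarrow> nat list set \<times> (nat list \<Rightarrow> nat)) \<Rightarrow>
   ('q \<Rightarrow> 'x \<Rightarrow> 'q) \<Rightarrow> 'q \<Rightarrow> ('q set \<Rightarrow> nat) \<Rightarrow> bool" where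
  "h_red F c \<delta> q0 A \<longleftrightarrow>
     (\<exists>\<phi> :: nat list \<Rightarrow> 'q set.
        (\<forall>\<tau>\<in>F. \<phi> \<tau> \<in> CM \<delta> q0) \<and>
        (\<forall>\<tau>\<in>F. \<forall>\<tau>'\<in>F. prefix \<tau> \<tau>' \<longrightarrow> le0 \<delta> (\<phi> \<tau>) (\<phi> \<tau>')) \<and>
        (\<forall>\<tau>\<in>F. \<exists>\<psi> :: nat list \<Rightarrow> 'q set.
           (\<forall>\<sigma>\<in>fst (c \<tau>). \<psi> \<sigma> \<in> cls0 \<delta> q0 (\<phi> \<tau>)) \<and>
           (\<forall>\<sigma>\<in>fst (c \<tau>). \<forall>\<sigma>'\<in>fst (c \<tau>). prefix \<sigma> \<sigma>' \<longrightarrow> \<psi> \<sigma> \<supseteq> \<psi> \<sigma>') \<and>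
           (\<forall>\<sigma>\<in>fst (c \<tau>). snd (c \<tau>) \<sigma> = A (\<psi> \<sigma>))))"

definition Util :: "nat list set \<Rightarrow> (nat list \<Rightarrow> (nat \<Rightarrow> 'x) set) \<Rightarrow> nat list \<Rightarrow> (nat \<Rightarrow> 'x) set" where
  "Util F U \<tau> = U \<tau> - \<Union>{U (\<tau> @ [i]) | i. \<tau> @ [i] \<in> F}"

text \<open>U gives the sets U_tau (tau in F); W tau sigma gives the sets U_{tau sigma} (sigma in V).\<close>
definition F_family ::
  "nat list set \<Rightarrow> (nat list \<Rightarrow> nat list set \<times> (nat list \<Rightarrow> nat)) \<Rightarrow>
   (nat list \<Rightarrow> (nat \<Rightarrow> 'x) set) \<Rightarrow> (nat list \<Rightarrow> nat list \<Rightarrow> (nat \<Rightarrow> 'x) set) \<Rightarrow> bool" where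
  "F_family F c U W \<longleftrightarrow>
     (\<forall>\<tau>\<in>F. open_w (U \<tau>)) \<and>
     (\<forall>\<tau>\<in>F. \<forall>i. \<tau> @ [i] \<in> F \<longrightarrow> U (\<tau> @ [i]) \<subseteq> U \<tau>) \<and>
     \<Union>(U ` F) = UNIV \<and>
     (\<forall>\<tau>\<in>F. \<exists>Bs :: nat list \<Rightarrow> (nat \<Rightarrow> 'x) set.
        (\<forall>\<sigma>\<in>fst (c \<tau>). Bs \<sigma> \<in> Sigma02 \<and> W \<tau> \<sigma> = Util F U \<tau> \<inter> Bs \<sigma>) \<and>
        (\<forall>\<sigma>\<in>fst (c \<tau>). \<forall>i. \<sigma> @ [i] \<in> fst (c \<tau>) \<longrightarrow> W \<tau> (\<sigma> @ [i]) \<subseteq> W \<tau> \<sigma>) \<and>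
        \<Union>(W \<tau> ` fst (c \<tau>)) = Util F U \<tau>)"

definition determines ::
  "nat list set \<Rightarrow> (nat list \<Rightarrow> nat list set \<times> (nat list \<Rightarrow> nat)) \<Rightarrow>
   (nat list \<Rightarrow> nat list \<Rightarrow> (nat \<Rightarrow> 'x) set) \<Rightarrow> ((nat \<Rightarrow> 'x) \<Rightarrow> nat) \<Rightarrow> bool" where
  "determines F c W B \<longleftrightarrow>
     (\<forall>\<tau>\<in>F. \<forall>\<sigma>\<in>fst (c \<tau>). \<forall>x.
        x \<in> W \<tau> \<sigma> - \<Union>{W \<tau> (\<sigma> @ [i]) | i. \<sigma> @ [i] \<in> fst (c \<tau>)} \<longrightarrow> B x = snd (c \<tau>) \<sigma>)"

definition SigmaF ::
  "nat \<Rightarrow> nat list set \<Rightarrow> (nat list \<Rightarrow> nat list set \<times> (nat list \<Rightarrow> nat)) \<Rightarrow> ((nat \<Rightarrow> 'x) \<Rightarrow> nat) set" where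
  "SigmaF k F c = {B. (\<forall>x. B x < k) \<and>
     (\<exists>U W. F_family F c U W \<and> determines F c W B)}"

end

theory Submission
  imports Defs "HOL-Library.Infinite_Set"
begin


definition visited :: "('q \<Rightarrow> 'x \<Rightarrow> 'q) \<Rightarrow> 'q \<Rightarrow> 'x list \<Rightarrow> 'q set" where
  "visited \<delta> q w = {foldl \<delta> q (take j w) | j. 1 \<le> j \<and> j \<le> length w}"

lemma run_foldl: "run \<delta> q0 \<xi> n = foldl \<delta> q0 (map \<xi> [0..<n])"
  by (induction n) auto

lemma run_shift: "foldl \<delta> (run \<delta> q0 \<xi> a) (map \<xi> [a..<a+j]) = run \<delta> q0 \<xi> (a+j)"
  by (induction j) auto

lemma take_map_upt: "a + j \<le> b \<Longrightarrow> take j (map \<xi> [a..<b]) = map \<xi> [a..<a+j]"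
  by (simp add: take_map take_upt)

lemma fM_INFM: "q \<in> fM \<delta> q0 \<xi> \<longleftrightarrow> (\<forall>m. \<exists>n>m. run \<delta> q0 \<xi> n = q)"
  unfolding fM_def by (simp add: INFM_nat)

lemma fM_nonempty:
  fixes \<delta> :: "'q::finite \<Rightarrow> 'x \<Rightarrow> 'q"
  shows "fM \<delta> q0 \<xi> \<noteq> {}"
proof -
  have "finite (range (run \<delta> q0 \<xi>))" by simp
  then obtain y where "infinite (run \<delta> q0 \<xi> -` {y})"
    using inf_img_fin_dom[of "run \<delta> q0 \<xi>" UNIV] by auto
  then have "\<exists>\<^sub>\<infinity>n. run \<delta> q0 \<xi> n = y"
    by (simp add: frequently_cofinite vimage_def)
  then show ?thesis unfolding fM_def by auto
qed

lemma fM_eventually: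
  fixes \<delta> :: "'q::finite \<Rightarrow> 'x \<Rightarrow> 'q"
  shows "\<exists>N. \<forall>n\<ge>N. run \<delta> q0 \<xi> n \<in> fM \<delta> q0 \<xi>"
proof -
  have "\<forall>q\<in>-fM \<delta> q0 \<xi>. \<forall>\<^sub>\<infinity>n. run \<delta> q0 \<xi> n \<noteq> q"
    unfolding fM_def by (auto simp: not_frequently)
  then have "\<forall>\<^sub>\<infinity>n. \<forall>q\<in>-fM \<delta> q0 \<xi>. run \<delta> q0 \<xi> n \<noteq> q"
    by (simp add: eventually_ball_finite)
  then obtain N where "\<forall>n\<ge>N. \<forall>q\<in>-fM \<delta> q0 \<xi>. run \<delta> q0 \<xi> n \<noteq> q"
    by (auto simp: MOST_nat_le)
  then show ?thesis by auto
qed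

lemma CM_conn:
  fixes \<delta> :: "'q::finite \<Rightarrow> 'x \<Rightarrow> 'q"
  assumes "C \<in> CM \<delta> q0" "p \<in> C" "q \<in> C"
  shows "\<exists>w. w \<noteq> [] \<and> foldl \<delta> p w = q \<and> visited \<delta> p w = C"
proof -
  obtain \<xi> where C: "C = fM \<delta> q0 \<xi>" using assms(1) unfolding CM_def by auto
  obtain N where N: "\<forall>n\<ge>N. run \<delta> q0 \<xi> n \<in> C" using fM_eventually C by blast
  obtain n1 where n1: "n1 > N" "run \<delta> q0 \<xi> n1 = p" using assms(2) C fM_INFM by metis
  have "\<forall>c\<in>C. \<exists>m. m > n1 \<and> run \<delta> q0 \<xi> m = c" using C fM_INFM by metis
  then obtain f where f: "\<And>c. c \<in> C \<Longrightarrow> f c > n1 \<and> run \<delta> q0 \<xi> (f c) = c" by metis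
  have finC: "finite C" by simp
  define n2 where "n2 = Max (insert n1 (f ` C))"
  have fn2: "c \<in> C \<Longrightarrow> f c \<le> n2" for c unfolding n2_def using finC by auto
  have "n1 \<le> n2" unfolding n2_def using finC by auto
  obtain n3 where n3: "n3 > n2" "run \<delta> q0 \<xi> n3 = q" using assms(3) C fM_INFM by metis
  define w where "w = map \<xi> [n1..<n3]"
  have len: "length w = n3 - n1" unfolding w_def by simp
  have tk: "foldl \<delta> p (take j w) = run \<delta> q0 \<xi> (n1 + j)" if "j \<le> length w" for j
  proof -
    have "n1 + j \<le> n3" using that len n3 \<open>n1 \<le> n2\<close> by linarith
    then show ?thesis
      unfolding w_def using take_map_upt[of n1 j n3 \<xi>] run_shift[of \<delta> q0 \<xi> n1 j] n1 by simp
  qed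
  have "w \<noteq> []" using len n3 \<open>n1 \<le> n2\<close> by auto
  moreover have "foldl \<delta> p w = q"
    using tk[of "length w"] len n3 \<open>n1 \<le> n2\<close> by simp
  moreover have "visited \<delta> p w = C"
  proof
    show "visited \<delta> p w \<subseteq> C"
      unfolding visited_def using tk N n1 by auto
    show "C \<subseteq> visited \<delta> p w"
    proof
      fix c assume c: "c \<in> C"
      have "1 \<le> f c - n1" "f c - n1 \<le> length w" using f[OF c] fn2[OF c] len n3 by auto
      moreover have "foldl \<delta> p (take (f c - n1) w) = c"
        using tk[of "f c - n1"] f[OF c] fn2[OF c] len n3 by simp
      ultimately have "\<exists>j. c = foldl \<delta> p (take j w) \<and> 1 \<le> j \<and> j \<le> length w" by metis
      then show "c \<in> visited \<delta> p w" unfolding visited_def by blast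
    qed
  qed
  ultimately show ?thesis by blast
qed

lemma reach_word: "reach \<delta> p q \<Longrightarrow> \<exists>w. foldl \<delta> p w = q"
  unfolding reach_def
proof (induction rule: rtrancl_induct)
  case base
  then show ?case by (intro exI[of _ "[]"]) simp
next
  case (step y z)
  then obtain w a where "foldl \<delta> p w = y" "z = \<delta> y a" by auto
  then show ?case by (intro exI[of _ "w @ [a]"]) simp
qed

lemma reach_refl: "reach \<delta> p p" unfolding reach_def by simp

lemma reach_trans: "reach \<delta> p q \<Longrightarrow> reach \<delta> q r \<Longrightarrow> reach \<delta> p r"
  unfolding reach_def by (rule rtrancl_trans)

lemma le0_refl: "le0 \<delta> C C" unfolding le0_def using reach_refl by metis

lemma le0_trans: "le0 \<delta> C D \<Longrightarrow> le0 \<delta> D E \<Longrightarrow> le0 \<delta> C E"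
  unfolding le0_def by (meson reach_trans)

lemma path_exists:
  fixes \<delta> :: "'q::finite \<Rightarrow> 'x \<Rightarrow> 'q"
  assumes "C \<in> CM \<delta> q0" "le0 \<delta> C D" "q \<in> C" "t \<in> D"
  shows "\<exists>w. foldl \<delta> q w = t"
proof -
  obtain p where p: "p \<in> C" "reach \<delta> p t" using assms unfolding le0_def by blast
  obtain w1 where w1: "foldl \<delta> q w1 = p" using CM_conn[OF assms(1) assms(3) p(1)] by blast
  obtain w2 where w2: "foldl \<delta> p w2 = t" using reach_word[OF p(2)] by blast
  show ?thesis using w1 w2 by (intro exI[of _ "w1 @ w2"]) simp
qed

lemma path_from_q0:
  assumes "C \<in> CM \<delta> q0" "t \<in> C"
  shows "\<exists>w. foldl \<delta> q0 w = t"
proof -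
  obtain \<xi> where C: "C = fM \<delta> q0 \<xi>" using assms(1) unfolding CM_def by auto
  obtain n where "run \<delta> q0 \<xi> n = t" using assms(2) C fM_INFM by metis
  then show ?thesis using run_foldl by metis
qed



lemma it_in:
  assumes "[] \<in> V" "\<And>\<sigma>. \<sigma> \<in> V \<Longrightarrow> f \<sigma> = \<sigma> \<or> (\<exists>i. f \<sigma> = \<sigma> @ [i] \<and> \<sigma> @ [i] \<in> V)"
  shows "(f ^^ n) [] \<in> V"
proof (induction n)
  case 0 then show ?case using assms(1) by simp
next
  case (Suc n)
  then have "f ((f ^^ n) []) \<in> V" using assms(2)[of "(f ^^ n) []"] by auto
  then show ?case by simp
qed

lemma it_fix:
  assumes "f ((f ^^ n) []) = (f ^^ n) []" "n \<le> m"
  shows "(f ^^ m) [] = (f ^^ n) []"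
  using assms(2)
proof (induction m rule: dec_induct)
  case base then show ?case by simp
next
  case (step m) then show ?case using assms(1) by simp
qed

lemma it_len:
  assumes "[] \<in> V" "\<And>\<sigma>. \<sigma> \<in> V \<Longrightarrow> f \<sigma> = \<sigma> \<or> (\<exists>i. f \<sigma> = \<sigma> @ [i] \<and> \<sigma> @ [i] \<in> V)"
  shows "(\<forall>m<n. f ((f ^^ m) []) \<noteq> (f ^^ m) []) \<Longrightarrow> length ((f ^^ n) []) = n"
proof (induction n)
  case 0 then show ?case by simp
next
  case (Suc n)
  have "(f ^^ n) [] \<in> V" using it_in[OF assms] .
  then have "f ((f ^^ n) []) = (f ^^ n) [] \<or> (\<exists>i. f ((f ^^ n) []) = (f ^^ n) [] @ [i])"
    using assms(2) by blast
  then show ?case using Suc by auto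
qed

lemma it_prefix_chain:
  assumes "[] \<in> V" "\<And>\<sigma>. \<sigma> \<in> V \<Longrightarrow> f \<sigma> = \<sigma> \<or> (\<exists>i. f \<sigma> = \<sigma> @ [i] \<and> \<sigma> @ [i] \<in> V)"
  shows "m \<le> n \<Longrightarrow> prefix ((f ^^ m) []) ((f ^^ n) [])"
proof (induction n rule: dec_induct)
  case base then show ?case by simp
next
  case (step n)
  have "(f ^^ n) [] \<in> V" using it_in[OF assms] .
  then have "f ((f ^^ n) []) = (f ^^ n) [] \<or> (\<exists>i. f ((f ^^ n) []) = (f ^^ n) [] @ [i])"
    using assms(2) by blast
  then show ?case using step by (auto intro: prefix_order.trans)
qed

lemma it_prefix_is_it:
  assumes "[] \<in> V" "\<And>\<sigma>. \<sigma> \<in> V \<Longrightarrow> f \<sigma> = \<sigma> \<or> (\<exists>i. f \<sigma> = \<sigma> @ [i] \<and> \<sigma> @ [i] \<in> V)"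
  shows "prefix \<sigma> ((f ^^ n) []) \<Longrightarrow> \<exists>m\<le>n. \<sigma> = (f ^^ m) []"
proof (induction n arbitrary: \<sigma>)
  case 0 then show ?case by simp
next
  case (Suc n)
  have "(f ^^ n) [] \<in> V" using it_in[OF assms] .
  then have "f ((f ^^ n) []) = (f ^^ n) [] \<or> (\<exists>i. f ((f ^^ n) []) = (f ^^ n) [] @ [i])"
    using assms(2) by blast
  then show ?case
  proof
    assume "f ((f ^^ n) []) = (f ^^ n) []"
    then show ?thesis using Suc by (metis funpow.simps(2) le_Suc_eq o_apply)
  next
    assume "\<exists>i. f ((f ^^ n) []) = (f ^^ n) [] @ [i]"
    then obtain i where i: "f ((f ^^ n) []) = (f ^^ n) [] @ [i]" by blast
    have "\<sigma> = (f ^^ n) [] @ [i] \<or> prefix \<sigma> ((f ^^ n) [])" using Suc.prems i by simp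
    then show ?thesis
    proof
      assume "\<sigma> = (f ^^ n) [] @ [i]"
      then have "\<sigma> = (f ^^ Suc n) []" using i by simp
      then show ?thesis by blast
    next
      assume "prefix \<sigma> ((f ^^ n) [])"
      then show ?thesis using Suc.IH by (meson le_Suc_eq)
    qed
  qed
qed

lemma len_lt_card:
  assumes "finite V" "\<And>\<rho> z. \<rho> @ z \<in> V \<Longrightarrow> \<rho> \<in> V" "\<sigma> \<in> V"
  shows "length \<sigma> < card V"
proof -
  have sub: "(\<lambda>j. take j \<sigma>) ` {..length \<sigma>} \<subseteq> V"
  proof
    fix y assume "y \<in> (\<lambda>j. take j \<sigma>) ` {..length \<sigma>}"
    then obtain j where "y = take j \<sigma>" by blast
    then show "y \<in> V" using assms(2)[of y "drop j \<sigma>"] assms(3) by simp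
  qed
  have "inj_on (\<lambda>j. take j \<sigma>) {..length \<sigma>}"
  proof (rule inj_onI)
    fix a b assume "a \<in> {..length \<sigma>}" "b \<in> {..length \<sigma>}" "take a \<sigma> = take b \<sigma>"
    then have "length (take a \<sigma>) = length (take b \<sigma>)" by simp
    then show "a = b" using \<open>a \<in> _\<close> \<open>b \<in> _\<close> by simp
  qed
  then have "card ((\<lambda>j. take j \<sigma>) ` {..length \<sigma>}) = Suc (length \<sigma>)"
    by (simp add: card_image)
  then show ?thesis using card_mono[OF assms(1) sub] by simp
qed

lemma it_final:
  assumes "[] \<in> V" "\<And>\<sigma>. \<sigma> \<in> V \<Longrightarrow> f \<sigma> = \<sigma> \<or> (\<exists>i. f \<sigma> = \<sigma> @ [i] \<and> \<sigma> @ [i] \<in> V)"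
    and "finite V" "\<And>\<rho> z. \<rho> @ z \<in> V \<Longrightarrow> \<rho> \<in> V"
  defines "g \<equiv> (f ^^ card V) []"
  shows "g \<in> V" and "f g = g"
    and "prefix \<sigma> g \<Longrightarrow> \<sigma> \<noteq> g \<Longrightarrow> f \<sigma> \<noteq> \<sigma> \<and> prefix (f \<sigma>) g"
proof -
  show gV: "g \<in> V" unfolding g_def using it_in[OF assms(1,2)] .
  show fx: "f g = g"
  proof (rule ccontr)
    assume nf: "f g \<noteq> g"
    have "\<forall>m<card V. f ((f ^^ m) []) \<noteq> (f ^^ m) []"
    proof (intro allI impI)
      fix m assume "m < card V"
      show "f ((f ^^ m) []) \<noteq> (f ^^ m) []"
      proof
        assume h: "f ((f ^^ m) []) = (f ^^ m) []"
        then have "g = (f ^^ m) []" unfolding g_def using it_fix[OF h, of "card V"] \<open>m < card V\<close> by simp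
        then show False using nf h by metis
      qed
    qed
    then have "length ((f ^^ card V) []) = card V" using it_len[OF assms(1,2), of "card V"] by blast
    then have "length g = card V" unfolding g_def .
    then show False using len_lt_card[OF assms(3,4) gV] by simp
  qed
  assume p: "prefix \<sigma> g" and ne: "\<sigma> \<noteq> g"
  obtain m where m: "m \<le> card V" "\<sigma> = (f ^^ m) []"
    using it_prefix_is_it[OF assms(1,2)] p unfolding g_def by blast
  have "m \<noteq> card V" using m ne unfolding g_def by auto
  then have mlt: "m < card V" using m(1) by simp
  have "f \<sigma> \<noteq> \<sigma>"
  proof
    assume h: "f \<sigma> = \<sigma>"
    then have "g = \<sigma>" unfolding g_def using it_fix[of f m "card V"] m mlt by simp
    then show False using ne by simp
  qed
  moreover have "prefix (f \<sigma>) g"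
    using it_prefix_chain[OF assms(1,2), of "Suc m" "card V"] m mlt unfolding g_def by simp
  ultimately show "f \<sigma> \<noteq> \<sigma> \<and> prefix (f \<sigma>) g" by blast
qed

lemma mono_bounded_const:
  fixes f :: "nat \<Rightarrow> nat"
  assumes "\<And>s. s \<ge> s0 \<Longrightarrow> f s \<le> f (Suc s)" "\<And>s. f s \<le> b"
  shows "\<exists>N l. \<forall>s\<ge>N. f s = l"
proof -
  have "f ` {s0..} \<subseteq> {..b}" using assms(2) by auto
  then have fin: "finite (f ` {s0..})" using finite_subset by blast
  have ne: "f ` {s0..} \<noteq> {}" by auto
  obtain N where N: "N \<ge> s0" "f N = Max (f ` {s0..})" using Max_in[OF fin ne] by auto
  have mono: "N \<le> s \<Longrightarrow> f N \<le> f s" for s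
  proof (induction s rule: dec_induct)
    case base then show ?case by simp
  next
    case (step n) then show ?case using assms(1)[of n] N by linarith
  qed
  have "\<forall>s\<ge>N. f s = f N"
  proof (intro allI impI)
    fix s assume "s \<ge> N"
    then have "f s \<le> f N" using N Max_ge[OF fin] by auto
    then show "f s = f N" using mono[OF \<open>s \<ge> N\<close>] by simp
  qed
  then show ?thesis by blast
qed



definition cns :: "(nat \<Rightarrow> 'x) \<Rightarrow> nat \<Rightarrow> (nat \<Rightarrow> 'x) set \<Rightarrow> bool" where
  "cns x s C \<longleftrightarrow> (\<exists>y\<in>C. \<forall>i<s. y i = x i)"

locale L4 =
  fixes \<delta> :: "'q::finite \<Rightarrow> 'x \<Rightarrow> 'q" and q0 :: 'q
    and F :: "nat list set" and V :: "nat list \<Rightarrow> nat list set"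
    and lab :: "nat list \<Rightarrow> nat list \<Rightarrow> nat"
    and U :: "nat list \<Rightarrow> (nat \<Rightarrow> 'x) set"
    and Cs :: "nat list \<Rightarrow> nat list \<Rightarrow> nat \<Rightarrow> (nat \<Rightarrow> 'x) set"
    and \<phi> :: "nat list \<Rightarrow> 'q set" and \<psi> :: "nat list \<Rightarrow> nat list \<Rightarrow> 'q set"
    and A :: "'q set \<Rightarrow> nat" and B :: "(nat \<Rightarrow> 'x) \<Rightarrow> nat"
  assumes finF: "finite F"
    and finV: "\<tau> \<in> F \<Longrightarrow> finite (V \<tau>)"
    and treeV: "\<tau> \<in> F \<Longrightarrow> \<rho> @ z \<in> V \<tau> \<Longrightarrow> \<rho> \<in> V \<tau>"
    and openU: "\<tau> \<in> F \<Longrightarrow> open_w (U \<tau>)"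
    and cover: "\<Union>(U ` F) = UNIV"
    and closedC: "\<tau> \<in> F \<Longrightarrow> \<sigma> \<in> V \<tau> \<Longrightarrow> closed_w (Cs \<tau> \<sigma> n)"
    and nestW: "\<tau> \<in> F \<Longrightarrow> \<sigma> @ [i] \<in> V \<tau> \<Longrightarrow> x \<in> Util F U \<tau> \<Longrightarrow>
        x \<in> \<Union>(range (Cs \<tau> (\<sigma> @ [i]))) \<Longrightarrow> x \<in> \<Union>(range (Cs \<tau> \<sigma>))"
    and coverW: "\<tau> \<in> F \<Longrightarrow> x \<in> Util F U \<tau> \<Longrightarrow> \<exists>\<sigma>\<in>V \<tau>. x \<in> \<Union>(range (Cs \<tau> \<sigma>))"
    and det: "\<tau> \<in> F \<Longrightarrow> \<sigma> \<in> V \<tau> \<Longrightarrow> x \<in> Util F U \<tau> \<Longrightarrow> x \<in> \<Union>(range (Cs \<tau> \<sigma>)) \<Longrightarrow>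
        (\<forall>i. \<sigma> @ [i] \<in> V \<tau> \<longrightarrow> x \<notin> \<Union>(range (Cs \<tau> (\<sigma> @ [i])))) \<Longrightarrow> B x = lab \<tau> \<sigma>"
    and phiCM: "\<tau> \<in> F \<Longrightarrow> \<phi> \<tau> \<in> CM \<delta> q0"
    and phimono: "\<tau> \<in> F \<Longrightarrow> \<tau> @ [i] \<in> F \<Longrightarrow> le0 \<delta> (\<phi> \<tau>) (\<phi> (\<tau> @ [i]))"
    and psiCM: "\<tau> \<in> F \<Longrightarrow> \<sigma> \<in> V \<tau> \<Longrightarrow> \<psi> \<tau> \<sigma> \<in> CM \<delta> q0"
    and psieq: "\<tau> \<in> F \<Longrightarrow> \<sigma> \<in> V \<tau> \<Longrightarrow> eq0 \<delta> (\<phi> \<tau>) (\<psi> \<tau> \<sigma>)"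
    and psianti: "\<tau> \<in> F \<Longrightarrow> \<sigma> @ z \<in> V \<tau> \<Longrightarrow> \<psi> \<tau> (\<sigma> @ z) \<subseteq> \<psi> \<tau> \<sigma>"
    and labA: "\<tau> \<in> F \<Longrightarrow> \<sigma> \<in> V \<tau> \<Longrightarrow> lab \<tau> \<sigma> = A (\<psi> \<tau> \<sigma>)"
begin

abbreviation BB where "BB \<tau> \<sigma> \<equiv> \<Union>(range (Cs \<tau> \<sigma>))"

definition pc :: "(nat \<Rightarrow> 'x) \<Rightarrow> nat list \<Rightarrow> nat list \<Rightarrow> nat \<Rightarrow> nat" where
  "pc x \<tau> \<sigma> s = (LEAST n. n = Suc s \<or> cns x s (Cs \<tau> \<sigma> n))"

definition ch :: "nat list \<Rightarrow> nat list \<Rightarrow> nat set" where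
  "ch \<tau> \<sigma> = {i. \<sigma> @ [i] \<in> V \<tau>}"

definition Mn :: "(nat \<Rightarrow> 'x) \<Rightarrow> nat list \<Rightarrow> nat list \<Rightarrow> nat \<Rightarrow> nat" where
  "Mn x \<tau> \<sigma> s = Min ((\<lambda>i. pc x \<tau> (\<sigma> @ [i]) s) ` ch \<tau> \<sigma>)"

definition stp :: "(nat \<Rightarrow> 'x) \<Rightarrow> nat list \<Rightarrow> nat \<Rightarrow> nat list \<Rightarrow> nat list" where
  "stp x \<tau> s \<sigma> = (if 0 < s \<and> ch \<tau> \<sigma> \<noteq> {} \<and> Mn x \<tau> \<sigma> s = Mn x \<tau> \<sigma> (s - 1)
     then \<sigma> @ [LEAST i. i \<in> ch \<tau> \<sigma> \<and> pc x \<tau> (\<sigma> @ [i]) s = Mn x \<tau> \<sigma> s] else \<sigma>)"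

definition gss :: "(nat \<Rightarrow> 'x) \<Rightarrow> nat list \<Rightarrow> nat \<Rightarrow> nat list" where
  "gss x \<tau> s = (stp x \<tau> s ^^ card (V \<tau>)) []"

lemma pc_le: "pc x \<tau> \<sigma> s \<le> Suc s"
  unfolding pc_def by (rule Least_le) simp

lemma cns_mono: "cns x (Suc s) C \<Longrightarrow> cns x s C"
  unfolding cns_def using less_SucI by blast

lemma pc_mono: "pc x \<tau> \<sigma> s \<le> pc x \<tau> \<sigma> (Suc s)"
proof -
  let ?n = "pc x \<tau> \<sigma> (Suc s)"
  have "?n = Suc (Suc s) \<or> cns x (Suc s) (Cs \<tau> \<sigma> ?n)"
    unfolding pc_def by (rule LeastI[of _ "Suc (Suc s)"]) simp
  then show ?thesis
  proof
    assume "?n = Suc (Suc s)" then show ?thesis using pc_le[of x \<tau> \<sigma> s] by simp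
  next
    assume "cns x (Suc s) (Cs \<tau> \<sigma> ?n)"
    then have "cns x s (Cs \<tau> \<sigma> ?n)" by (rule cns_mono)
    then show ?thesis unfolding pc_def[of x \<tau> \<sigma> s] by (intro Least_le) simp
  qed
qed

lemma pc_mono': "s \<le> t \<Longrightarrow> pc x \<tau> \<sigma> s \<le> pc x \<tau> \<sigma> t"
  using pc_mono by (rule lift_Suc_mono_le)

lemma pc_bounded: "x \<in> Cs \<tau> \<sigma> n \<Longrightarrow> pc x \<tau> \<sigma> s \<le> n"
  unfolding pc_def by (rule Least_le) (auto simp: cns_def)

lemma pc_agree: "(\<forall>i<s. \<eta> i = x i) \<Longrightarrow> pc \<eta> \<tau> \<sigma> s = pc x \<tau> \<sigma> s"
  unfolding pc_def cns_def by simp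

lemma pc_unbounded:
  assumes "\<tau> \<in> F" "\<sigma> \<in> V \<tau>" "x \<notin> BB \<tau> \<sigma>"
  shows "\<exists>N. \<forall>s\<ge>N. K < pc x \<tau> \<sigma> s"
proof -
  have "\<forall>m\<in>{..K}. \<exists>t. \<forall>s\<ge>t. \<not> cns x s (Cs \<tau> \<sigma> m)"
  proof
    fix m assume "m \<in> {..K}"
    have "x \<in> - Cs \<tau> \<sigma> m" using assms(3) by auto
    then obtain t where t: "\<forall>\<eta>. (\<forall>i<t. \<eta> i = x i) \<longrightarrow> \<eta> \<in> - Cs \<tau> \<sigma> m"
      using closedC[OF assms(1,2), of m] unfolding closed_w_def open_w_def by blast
    have "\<forall>s\<ge>t. \<not> cns x s (Cs \<tau> \<sigma> m)"
      unfolding cns_def using t by fastforce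
    then show "\<exists>t. \<forall>s\<ge>t. \<not> cns x s (Cs \<tau> \<sigma> m)" by blast
  qed
  then obtain t where t: "\<And>m. m \<in> {..K} \<Longrightarrow> \<forall>s\<ge>t m. \<not> cns x s (Cs \<tau> \<sigma> m)" by metis
  define N where "N = max K (Max (t ` {..K}))"
  have "K < pc x \<tau> \<sigma> s" if "s \<ge> N" for s
  proof (rule ccontr)
    assume "\<not> K < pc x \<tau> \<sigma> s"
    then have le: "pc x \<tau> \<sigma> s \<le> K" by simp
    have "pc x \<tau> \<sigma> s = Suc s \<or> cns x s (Cs \<tau> \<sigma> (pc x \<tau> \<sigma> s))"
      unfolding pc_def by (rule LeastI[of _ "Suc s"]) simp
    moreover have "pc x \<tau> \<sigma> s \<noteq> Suc s" using le that unfolding N_def by simp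
    moreover have "t (pc x \<tau> \<sigma> s) \<le> s"
      using le that unfolding N_def by (meson Max_ge atMost_iff finite_atMost finite_imageI image_eqI max.boundedE order_trans)
    ultimately show False using t[of "pc x \<tau> \<sigma> s"] le by auto
  qed
  then show ?thesis by blast
qed

lemma pc_conv:
  assumes "x \<in> BB \<tau> \<sigma>"
  shows "\<exists>N l. \<forall>s\<ge>N. pc x \<tau> \<sigma> s = l"
proof -
  obtain n where "x \<in> Cs \<tau> \<sigma> n" using assms by auto
  then show ?thesis using mono_bounded_const[of 0 "pc x \<tau> \<sigma>" n] pc_mono pc_bounded by blast
qed

lemma finite_ch: "\<tau> \<in> F \<Longrightarrow> finite (ch \<tau> \<sigma>)"
  unfolding ch_def using finV by (auto intro: finite_vimageI[of _ "\<lambda>i. \<sigma> @ [i]", unfolded vimage_def] simp: inj_def)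

lemma stp_cases:
  assumes "\<tau> \<in> F"
  shows "stp x \<tau> s \<sigma> = \<sigma> \<or> (\<exists>i. stp x \<tau> s \<sigma> = \<sigma> @ [i] \<and> \<sigma> @ [i] \<in> V \<tau>)"
proof (cases "0 < s \<and> ch \<tau> \<sigma> \<noteq> {} \<and> Mn x \<tau> \<sigma> s = Mn x \<tau> \<sigma> (s - 1)")
  case True
  have "Mn x \<tau> \<sigma> s \<in> (\<lambda>i. pc x \<tau> (\<sigma> @ [i]) s) ` ch \<tau> \<sigma>"
    unfolding Mn_def using True finite_ch[OF assms] by (intro Min_in) auto
  then obtain j where "j \<in> ch \<tau> \<sigma> \<and> pc x \<tau> (\<sigma> @ [j]) s = Mn x \<tau> \<sigma> s" by auto
  then have "(LEAST i. i \<in> ch \<tau> \<sigma> \<and> pc x \<tau> (\<sigma> @ [i]) s = Mn x \<tau> \<sigma> s) \<in> ch \<tau> \<sigma>"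
    by (metis (mono_tags, lifting) LeastI)
  then show ?thesis using True unfolding stp_def ch_def by auto
next
  case False
  then show ?thesis unfolding stp_def by auto
qed

lemma root_in: "\<tau> \<in> F \<Longrightarrow> V \<tau> \<noteq> {} \<Longrightarrow> [] \<in> V \<tau>"
  using treeV[of \<tau> "[]"] by auto

lemma gss_props:
  assumes "\<tau> \<in> F" "V \<tau> \<noteq> {}"
  shows "gss x \<tau> s \<in> V \<tau>" and "stp x \<tau> s (gss x \<tau> s) = gss x \<tau> s"
    and "prefix \<sigma> (gss x \<tau> s) \<Longrightarrow> \<sigma> \<noteq> gss x \<tau> s \<Longrightarrow>
          stp x \<tau> s \<sigma> \<noteq> \<sigma> \<and> prefix (stp x \<tau> s \<sigma>) (gss x \<tau> s)"
  using it_final[OF root_in[OF assms] stp_cases[OF assms(1), of x s] finV[OF assms(1)] treeV[OF assms(1)]] unfolding gss_def by auto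

lemma Mn_agree: assumes "\<forall>i<s. \<eta> i = x i" shows "Mn \<eta> \<tau> \<sigma> s = Mn x \<tau> \<sigma> s"
  unfolding Mn_def using pc_agree[OF assms] by simp

lemma gss_agree:
  assumes "\<forall>i<s. \<eta> i = x i"
  shows "gss \<eta> \<tau> s = gss x \<tau> s"
proof -
  have "stp \<eta> \<tau> s = stp x \<tau> s"
  proof
    fix \<sigma>
    have a1: "Mn \<eta> \<tau> \<sigma> s = Mn x \<tau> \<sigma> s" using Mn_agree assms by blast
    have a2: "Mn \<eta> \<tau> \<sigma> (s - 1) = Mn x \<tau> \<sigma> (s - 1)" using Mn_agree assms by simp
    have a3: "pc \<eta> \<tau> \<sigma>' s = pc x \<tau> \<sigma>' s" for \<sigma>' using pc_agree assms by blast
    show "stp \<eta> \<tau> s \<sigma> = stp x \<tau> s \<sigma>" unfolding stp_def a1 a2 a3 ..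
  qed
  then show ?thesis unfolding gss_def by simp
qed

end


context L4 begin

lemma BB_root:
  assumes "\<tau> \<in> F" "x \<in> Util F U \<tau>"
  shows "\<sigma> \<in> V \<tau> \<Longrightarrow> x \<in> BB \<tau> \<sigma> \<Longrightarrow> x \<in> BB \<tau> []"
proof (induction \<sigma> rule: rev_induct)
  case Nil then show ?case by simp
next
  case (snoc a \<sigma>)
  have "\<sigma> \<in> V \<tau>" using treeV[OF assms(1), of \<sigma> "[a]"] snoc.prems(1) by simp
  moreover have "x \<in> BB \<tau> \<sigma>" using nestW[OF assms(1) snoc.prems(1) assms(2) snoc.prems(2)] .
  ultimately show ?case using snoc.IH by blast
qed

lemma gss_limit:
  assumes \<tau>F: "\<tau> \<in> F" and xU: "x \<in> Util F U \<tau>"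
  shows "\<exists>\<sigma>0\<in>V \<tau>. x \<in> BB \<tau> \<sigma>0 \<and> (\<forall>i. \<sigma>0 @ [i] \<in> V \<tau> \<longrightarrow> x \<notin> BB \<tau> (\<sigma>0 @ [i])) \<and>
     (\<exists>N. \<forall>s\<ge>N. prefix \<sigma>0 (gss x \<tau> s)) \<and> (\<forall>m. \<exists>s\<ge>m. gss x \<tau> s = \<sigma>0)"
proof -
  obtain \<sigma>1 where "\<sigma>1 \<in> V \<tau>" "x \<in> BB \<tau> \<sigma>1" using coverW[OF \<tau>F xU] by blast
  then have r: "[] \<in> V \<tau>" "x \<in> BB \<tau> []" using BB_root[OF \<tau>F xU] treeV[OF \<tau>F, of "[]" \<sigma>1] by auto
  have Vne: "V \<tau> \<noteq> {}" using r by auto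
  define E where "E = {\<sigma> \<in> V \<tau>. x \<in> BB \<tau> \<sigma> \<and> (\<exists>N. \<forall>s\<ge>N. prefix \<sigma> (gss x \<tau> s))}"
  have E0: "[] \<in> E" unfolding E_def using r by auto
  have finE: "finite E" unfolding E_def using finV[OF \<tau>F] by auto
  define mx where "mx = Max (length ` E)"
  have "mx \<in> length ` E" unfolding mx_def using finE E0 by (intro Max_in) auto
  then obtain \<sigma>0 where \<sigma>0E: "\<sigma>0 \<in> E" and \<sigma>0len: "length \<sigma>0 = mx" by auto
  have maxl: "length \<sigma> \<le> length \<sigma>0" if "\<sigma> \<in> E" for \<sigma>
    using Max_ge[of "length ` E" "length \<sigma>"] finE \<sigma>0len that unfolding mx_def by auto
  from \<sigma>0E have \<sigma>0V: "\<sigma>0 \<in> V \<tau>" and x\<sigma>0: "x \<in> BB \<tau> \<sigma>0"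
    and evp: "\<exists>N. \<forall>s\<ge>N. prefix \<sigma>0 (gss x \<tau> s)"
    unfolding E_def by auto
  have finch: "finite (ch \<tau> \<sigma>0)" by (rule finite_ch[OF \<tau>F])
  have leaf: "\<forall>i. \<sigma>0 @ [i] \<in> V \<tau> \<longrightarrow> x \<notin> BB \<tau> (\<sigma>0 @ [i])"
  proof (rule ccontr)
    assume nl: "\<not> (\<forall>i. \<sigma>0 @ [i] \<in> V \<tau> \<longrightarrow> x \<notin> BB \<tau> (\<sigma>0 @ [i]))"
    define chS where "chS = {i \<in> ch \<tau> \<sigma>0. x \<in> BB \<tau> (\<sigma>0 @ [i])}"
    have chSne: "chS \<noteq> {}" using nl unfolding chS_def ch_def by auto
    have chSch: "chS \<subseteq> ch \<tau> \<sigma>0" unfolding chS_def by auto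
    have finchS: "finite chS" using finch chSch finite_subset by blast
    have "\<forall>i\<in>chS. \<exists>N l. \<forall>s\<ge>N. pc x \<tau> (\<sigma>0 @ [i]) s = l"
      unfolding chS_def using pc_conv by blast
    then obtain Nl lim where lim: "\<And>i s. i \<in> chS \<Longrightarrow> s \<ge> Nl i \<Longrightarrow> pc x \<tau> (\<sigma>0 @ [i]) s = lim i"
      by metis
    define m where "m = Min (lim ` chS)"
    define J where "J = {i \<in> chS. lim i = m}"
    have "m \<in> lim ` chS" unfolding m_def using finchS chSne by (intro Min_in) auto
    then have Jne: "J \<noteq> {}" unfolding J_def by auto
    have mle: "m \<le> lim i" if "i \<in> chS" for i unfolding m_def using finchS that by auto
    have "\<forall>i\<in>ch \<tau> \<sigma>0 - chS. \<exists>N. \<forall>s\<ge>N. m < pc x \<tau> (\<sigma>0 @ [i]) s"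
      using pc_unbounded[OF \<tau>F] unfolding chS_def ch_def by auto
    then obtain Nu where Nu: "\<And>i s. i \<in> ch \<tau> \<sigma>0 - chS \<Longrightarrow> s \<ge> Nu i \<Longrightarrow> m < pc x \<tau> (\<sigma>0 @ [i]) s"
      by metis
    obtain Np where Np: "\<And>s. s \<ge> Np \<Longrightarrow> prefix \<sigma>0 (gss x \<tau> s)" using evp by blast
    define NS where "NS = {Np} \<union> Nl ` chS \<union> Nu ` (ch \<tau> \<sigma>0 - chS)"
    define N where "N = Max NS"
    have finN: "finite NS" unfolding NS_def using finchS finch by auto
    have NNp: "Np \<le> N" unfolding N_def NS_def using finN NS_def by (intro Max_ge) auto
    have NNl: "Nl i \<le> N" if "i \<in> chS" for i
      unfolding N_def using finN that unfolding NS_def by (intro Max_ge) auto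
    have NNu: "Nu i \<le> N" if "i \<in> ch \<tau> \<sigma>0 - chS" for i
      unfolding N_def using finN that unfolding NS_def by (intro Max_ge) auto
    have vals: "m \<le> pc x \<tau> (\<sigma>0 @ [i]) s \<and> (pc x \<tau> (\<sigma>0 @ [i]) s = m \<longleftrightarrow> i \<in> J)"
      if "s \<ge> N" "i \<in> ch \<tau> \<sigma>0" for i s
    proof (cases "i \<in> chS")
      case True
      then have "pc x \<tau> (\<sigma>0 @ [i]) s = lim i" using lim[OF True] NNl[OF True] that(1) by simp
      then show ?thesis using mle[OF True] True unfolding J_def by auto
    next
      case False
      then have "m < pc x \<tau> (\<sigma>0 @ [i]) s" using Nu[of i s] NNu[of i] that False by simp
      then show ?thesis using False unfolding J_def by auto
    qed
    have JS: "J \<subseteq> chS" unfolding J_def by auto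
    have Mn_eq: "Mn x \<tau> \<sigma>0 s = m" if "s \<ge> N" for s
      unfolding Mn_def
    proof (rule Min_eqI)
      show "finite ((\<lambda>i. pc x \<tau> (\<sigma>0 @ [i]) s) ` ch \<tau> \<sigma>0)" using finch by simp
      show "m \<le> y" if y: "y \<in> (\<lambda>i. pc x \<tau> (\<sigma>0 @ [i]) s) ` ch \<tau> \<sigma>0" for y
      proof -
        obtain i where i: "i \<in> ch \<tau> \<sigma>0" "y = pc x \<tau> (\<sigma>0 @ [i]) s" using y by blast
        show ?thesis using vals[OF \<open>s \<ge> N\<close> i(1)] i(2) by simp
      qed
      obtain j where jJ: "j \<in> J" using Jne by auto
      then have jc: "j \<in> ch \<tau> \<sigma>0" using JS chSch by blast
      have "pc x \<tau> (\<sigma>0 @ [j]) s = m" using vals[OF \<open>s \<ge> N\<close> jc] jJ by simp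
      then show "m \<in> (\<lambda>i. pc x \<tau> (\<sigma>0 @ [i]) s) ` ch \<tau> \<sigma>0" using jc by (intro image_eqI[of _ _ j]) simp_all
    qed
    define j where "j = (LEAST i. i \<in> J)"
    obtain j0 where "j0 \<in> J" using Jne by auto
    then have jJ: "j \<in> J" unfolding j_def by (rule LeastI)
    have stp_eq: "stp x \<tau> s \<sigma>0 = \<sigma>0 @ [j]" if "s \<ge> Suc N" for s
    proof -
      have c: "0 < s \<and> ch \<tau> \<sigma>0 \<noteq> {} \<and> Mn x \<tau> \<sigma>0 s = Mn x \<tau> \<sigma>0 (s - 1)"
        using that Mn_eq[of s] Mn_eq[of "s - 1"] chSne chSch by auto
      have "(\<lambda>i. i \<in> ch \<tau> \<sigma>0 \<and> pc x \<tau> (\<sigma>0 @ [i]) s = Mn x \<tau> \<sigma>0 s) = (\<lambda>i. i \<in> J)"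
      proof
        fix i
        show "(i \<in> ch \<tau> \<sigma>0 \<and> pc x \<tau> (\<sigma>0 @ [i]) s = Mn x \<tau> \<sigma>0 s) = (i \<in> J)"
          using vals[of s i] Mn_eq[of s] that JS chSch by auto
      qed
      then show ?thesis using c unfolding stp_def j_def by simp
    qed
    have jV: "\<sigma>0 @ [j] \<in> V \<tau>" and xj: "x \<in> BB \<tau> (\<sigma>0 @ [j])"
      using jJ JS unfolding chS_def ch_def by auto
    have "prefix (\<sigma>0 @ [j]) (gss x \<tau> s)" if "s \<ge> Suc (max N Np)" for s
    proof -
      have p: "prefix \<sigma>0 (gss x \<tau> s)" using Np that by simp
      have se: "stp x \<tau> s \<sigma>0 = \<sigma>0 @ [j]" using stp_eq that by simp
      have ne: "\<sigma>0 \<noteq> gss x \<tau> s"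
      proof
        assume "\<sigma>0 = gss x \<tau> s"
        then have "stp x \<tau> s \<sigma>0 = \<sigma>0" using gss_props(2)[OF \<tau>F Vne, of x s] by simp
        then show False using se by simp
      qed
      show ?thesis using gss_props(3)[OF \<tau>F Vne p ne] se by simp
    qed
    then have "\<sigma>0 @ [j] \<in> E" unfolding E_def using jV xj by blast
    then show False using maxl by fastforce
  qed
  have io: "\<forall>m. \<exists>s\<ge>m. gss x \<tau> s = \<sigma>0"
  proof (rule ccontr)
    assume "\<not> (\<forall>m. \<exists>s\<ge>m. gss x \<tau> s = \<sigma>0)"
    then obtain m0 where m0: "\<And>s. s \<ge> m0 \<Longrightarrow> gss x \<tau> s \<noteq> \<sigma>0" by auto
    obtain Np where Np: "\<And>s. s \<ge> Np \<Longrightarrow> prefix \<sigma>0 (gss x \<tau> s)" using evp by blast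
    define N where "N = max m0 Np"
    have st: "0 < s \<and> ch \<tau> \<sigma>0 \<noteq> {} \<and> Mn x \<tau> \<sigma>0 s = Mn x \<tau> \<sigma>0 (s - 1)" if "s \<ge> N" for s
    proof -
      have p: "prefix \<sigma>0 (gss x \<tau> s)" using Np that unfolding N_def by simp
      have ne: "\<sigma>0 \<noteq> gss x \<tau> s" using m0[of s] that unfolding N_def by simp
      have "stp x \<tau> s \<sigma>0 \<noteq> \<sigma>0" using gss_props(3)[OF \<tau>F Vne p ne] by blast
      then show ?thesis unfolding stp_def by (auto split: if_splits)
    qed
    have Mconst: "Mn x \<tau> \<sigma>0 s = Mn x \<tau> \<sigma>0 N" if "s \<ge> N" for s
      using that
    proof (induction s rule: dec_induct)
      case base then show ?case by simp
    next
      case (step n)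
      then show ?case using st[of "Suc n"] by simp
    qed
    have chne: "ch \<tau> \<sigma>0 \<noteq> {}" using st[of N] by simp
    have "\<forall>i\<in>ch \<tau> \<sigma>0. \<exists>N'. \<forall>s\<ge>N'. Mn x \<tau> \<sigma>0 N < pc x \<tau> (\<sigma>0 @ [i]) s"
      using pc_unbounded[OF \<tau>F] leaf unfolding ch_def by auto
    then obtain Nu where Nu: "\<And>i s. i \<in> ch \<tau> \<sigma>0 \<Longrightarrow> s \<ge> Nu i \<Longrightarrow> Mn x \<tau> \<sigma>0 N < pc x \<tau> (\<sigma>0 @ [i]) s"
      by metis
    define s where "s = max N (Max (Nu ` ch \<tau> \<sigma>0))"
    have "Nu i \<le> s" if "i \<in> ch \<tau> \<sigma>0" for i
      unfolding s_def using finch that by (simp add: le_max_iff_disj)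
    then have "Mn x \<tau> \<sigma>0 N < Mn x \<tau> \<sigma>0 s"
      unfolding Mn_def[of x \<tau> \<sigma>0 s] using finch chne Nu by (auto simp add: Min_gr_iff)
    moreover have "Mn x \<tau> \<sigma>0 s = Mn x \<tau> \<sigma>0 N" using Mconst[of s] unfolding s_def by simp
    ultimately show False by simp
  qed
  show ?thesis using \<sigma>0V x\<sigma>0 leaf evp io by blast
qed

end


context L4 begin

definition dtc :: "(nat \<Rightarrow> 'x) \<Rightarrow> nat \<Rightarrow> nat list \<Rightarrow> bool" where
  "dtc x s \<tau> \<longleftrightarrow> (\<forall>\<eta>. (\<forall>i<s. \<eta> i = x i) \<longrightarrow> \<eta> \<in> U \<tau>)"

fun ts :: "(nat \<Rightarrow> 'x) \<Rightarrow> nat \<Rightarrow> nat list option" where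
  "ts x 0 = None"
| "ts x (Suc s) = (case ts x s of
      None \<Rightarrow> (if \<exists>\<tau>\<in>F. dtc x (Suc s) \<tau> then Some (SOME \<tau>. \<tau> \<in> F \<and> dtc x (Suc s) \<tau>) else None)
    | Some \<tau> \<Rightarrow> (if \<exists>i. \<tau> @ [i] \<in> F \<and> dtc x (Suc s) (\<tau> @ [i])
                then Some (\<tau> @ [SOME i. \<tau> @ [i] \<in> F \<and> dtc x (Suc s) (\<tau> @ [i])]) else Some \<tau>))"

declare ts.simps(2)[simp del]

lemma dtc_mono: "dtc x s \<tau> \<Longrightarrow> s \<le> t \<Longrightarrow> dtc x t \<tau>"
  unfolding dtc_def by auto

lemma dtc_agree: "(\<forall>i<s. \<eta> i = x i) \<Longrightarrow> dtc \<eta> s \<tau> = dtc x s \<tau>"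
  unfolding dtc_def by auto

lemma ts_inv: "ts x s = Some \<tau> \<Longrightarrow> \<tau> \<in> F \<and> dtc x s \<tau>"
proof (induction s arbitrary: \<tau>)
  case 0 then show ?case by simp
next
  case (Suc s)
  show ?case
  proof (cases "ts x s")
    case None
    then have ex: "\<exists>\<tau>\<in>F. dtc x (Suc s) \<tau>" and eq: "\<tau> = (SOME \<tau>. \<tau> \<in> F \<and> dtc x (Suc s) \<tau>)"
      using Suc.prems by (auto simp: ts.simps(2) split: if_splits)
    from ex have "\<exists>\<tau>. \<tau> \<in> F \<and> dtc x (Suc s) \<tau>" by blast
    from someI_ex[OF this] show ?thesis using eq by simp
  next
    case (Some \<tau>0)
    show ?thesis
    proof (cases "\<exists>i. \<tau>0 @ [i] \<in> F \<and> dtc x (Suc s) (\<tau>0 @ [i])")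
      case True
      then have eq: "\<tau> = \<tau>0 @ [SOME i. \<tau>0 @ [i] \<in> F \<and> dtc x (Suc s) (\<tau>0 @ [i])]"
        using Suc.prems Some by (simp add: ts.simps(2))
      from someI_ex[OF True] show ?thesis using eq by simp
    next
      case False
      then have "\<tau> = \<tau>0" using Suc.prems Some by (auto simp: ts.simps(2) split: if_splits)
      then show ?thesis using Suc.IH[OF Some] dtc_mono[of x s \<tau>0 "Suc s"] by simp
    qed
  qed
qed

lemma ts_step: "ts x s = Some \<tau> \<Longrightarrow> ts x (Suc s) = Some \<tau> \<or> (\<exists>i. ts x (Suc s) = Some (\<tau> @ [i]))"
  by (auto simp: ts.simps(2))

lemma ts_None_prev: "ts x (Suc s) = None \<Longrightarrow> ts x s = None"
  by (cases "ts x s") (auto simp: ts.simps(2) split: if_splits)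

lemma ts_agree: "(\<forall>i<s. \<eta> i = x i) \<Longrightarrow> ts \<eta> s = ts x s"
proof (induction s)
  case 0 then show ?case by simp
next
  case (Suc s)
  have a: "ts \<eta> s = ts x s" using Suc by simp
  have b: "dtc \<eta> (Suc s) = dtc x (Suc s)" using dtc_agree[OF Suc.prems] by blast
  show ?case by (simp only: ts.simps a b)
qed

lemma CM_ne: "C \<in> CM \<delta> q0 \<Longrightarrow> C \<noteq> {}"
  unfolding CM_def using fM_nonempty by blast

lemma ts_limit: "\<exists>\<tau> N. \<tau> \<in> F \<and> (\<forall>s\<ge>N. ts x s = Some \<tau>) \<and> x \<in> Util F U \<tau>"
proof -
  obtain \<tau>1 where \<tau>1: "\<tau>1 \<in> F" "x \<in> U \<tau>1" using cover by blast
  obtain n where "\<forall>\<eta>. (\<forall>i<n. \<eta> i = x i) \<longrightarrow> \<eta> \<in> U \<tau>1"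
    using openU[OF \<tau>1(1)] \<tau>1(2) unfolding open_w_def by blast
  then have "dtc x n \<tau>1" unfolding dtc_def by blast
  then have d1: "dtc x (Suc n) \<tau>1" using dtc_mono by simp
  have sn: "ts x (Suc n) \<noteq> None"
  proof (cases "ts x n")
    case None then show ?thesis using d1 \<tau>1(1) by (auto simp: ts.simps(2))
  next
    case (Some a) then show ?thesis using ts_step[OF Some] by auto
  qed
  have some_after: "ts x s \<noteq> None" if "s \<ge> Suc n" for s
    using that
  proof (induction s rule: dec_induct)
    case base then show ?case using sn .
  next
    case (step m) then show ?case using ts_step by fastforce
  qed
  define f where "f s = (case ts x s of None \<Rightarrow> 0 | Some \<tau> \<Rightarrow> length \<tau>)" for s
  have fmono: "f s \<le> f (Suc s)" if sn1: "s \<ge> Suc n" for s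
  proof -
    obtain \<tau> where t: "ts x s = Some \<tau>" using some_after[OF sn1] by auto
    then show ?thesis using ts_step[OF t] unfolding f_def by auto
  qed
  have fb: "f s \<le> Max (length ` F)" for s
  proof (cases "ts x s")
    case None then show ?thesis unfolding f_def by simp
  next
    case (Some \<tau>)
    then have "\<tau> \<in> F" using ts_inv by blast
    then show ?thesis unfolding f_def using Some finF by simp
  qed
  obtain N0 l where N0: "\<forall>s\<ge>N0. f s = l" using mono_bounded_const[of "Suc n" f, OF fmono fb] by blast
  define N where "N = max N0 (Suc n)"
  have stay: "ts x (Suc s) = ts x s" if sN: "s \<ge> N" for s
  proof -
    obtain \<tau> where t: "ts x s = Some \<tau>" using some_after[of s] sN unfolding N_def by auto
    have fe: "f (Suc s) = f s" using N0 sN unfolding N_def by simp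
    have "ts x (Suc s) = Some \<tau> \<or> (\<exists>i. ts x (Suc s) = Some (\<tau> @ [i]))" using ts_step[OF t] .
    then show ?thesis
    proof
      assume "ts x (Suc s) = Some \<tau>" then show ?thesis using t by simp
    next
      assume "\<exists>i. ts x (Suc s) = Some (\<tau> @ [i])"
      then obtain i where "ts x (Suc s) = Some (\<tau> @ [i])" by blast
      then have "f (Suc s) = Suc (f s)" using t unfolding f_def by simp
      then show ?thesis using fe by simp
    qed
  qed
  obtain \<tau> where tN: "ts x N = Some \<tau>" using some_after[of N] unfolding N_def by auto
  have allN: "ts x s = Some \<tau>" if "s \<ge> N" for s
    using that
  proof (induction s rule: dec_induct)
    case base then show ?case using tN .
  next
    case (step m) then show ?case using stay[of m] by simp
  qed
  have \<tau>F: "\<tau> \<in> F" and "dtc x N \<tau>" using ts_inv[OF tN] by auto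
  then have xU: "x \<in> U \<tau>" unfolding dtc_def by blast
  have nch: "x \<notin> U (\<tau> @ [i])" if chF: "\<tau> @ [i] \<in> F" for i
  proof
    assume "x \<in> U (\<tau> @ [i])"
    then obtain n2 where "\<forall>\<eta>. (\<forall>j<n2. \<eta> j = x j) \<longrightarrow> \<eta> \<in> U (\<tau> @ [i])"
      using openU[OF chF] unfolding open_w_def by blast
    then have "dtc x n2 (\<tau> @ [i])" unfolding dtc_def by blast
    define s where "s = max N n2"
    have "dtc x (Suc s) (\<tau> @ [i])" using dtc_mono[OF \<open>dtc x n2 (\<tau> @ [i])\<close>] unfolding s_def by simp
    then have ex: "\<exists>i. \<tau> @ [i] \<in> F \<and> dtc x (Suc s) (\<tau> @ [i])" using chF by blast
    have "ts x s = Some \<tau>" using allN unfolding s_def by simp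
    then have "ts x (Suc s) \<noteq> Some \<tau>" using ex by (simp add: ts.simps(2))
    then show False using allN[of "Suc s"] unfolding s_def by simp
  qed
  have "x \<in> Util F U \<tau>" unfolding Util_def using xU nch by auto
  then show ?thesis using \<tau>F allN by blast
qed

definition Tg :: "(nat \<Rightarrow> 'x) \<Rightarrow> nat \<Rightarrow> 'q set" where
  "Tg x s = (case ts x s of None \<Rightarrow> {} | Some \<tau> \<Rightarrow> if V \<tau> = {} then \<phi> \<tau> else \<psi> \<tau> (gss x \<tau> s))"

lemma eq0_refl: "eq0 \<delta> C C" unfolding eq0_def using le0_refl by blast

lemma Tg_props:
  assumes "ts x s = Some \<tau>"
  shows "Tg x s \<in> CM \<delta> q0 \<and> eq0 \<delta> (\<phi> \<tau>) (Tg x s) \<and> Tg x s \<noteq> {}"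
proof -
  have \<tau>F: "\<tau> \<in> F" using ts_inv[OF assms] by blast
  have "Tg x s \<in> CM \<delta> q0 \<and> eq0 \<delta> (\<phi> \<tau>) (Tg x s)"
  proof (cases "V \<tau> = {}")
    case True then show ?thesis unfolding Tg_def using assms phiCM[OF \<tau>F] eq0_refl by simp
  next
    case False
    have "gss x \<tau> s \<in> V \<tau>" using gss_props(1)[OF \<tau>F False] .
    then show ?thesis unfolding Tg_def using assms False psiCM[OF \<tau>F] psieq[OF \<tau>F] by simp
  qed
  then show ?thesis using CM_ne by blast
qed

definition wd :: "(nat \<Rightarrow> 'x) \<Rightarrow> nat \<Rightarrow> 'q \<Rightarrow> 'x list" where
  "wd x s q = (case ts x (Suc s) of None \<Rightarrow> [] | Some \<tau>' \<Rightarrow>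
    (let T' = Tg x (Suc s); t = (SOME t. t \<in> T');
         R = (ts x s = Some \<tau>' \<and> V \<tau>' \<noteq> {});
         \<rho> = longest_common_prefix (gss x \<tau>' s) (gss x \<tau>' (Suc s));
         pth = (SOME w. foldl \<delta> q w = t \<and> (R \<longrightarrow> visited \<delta> q w \<subseteq> \<psi> \<tau>' \<rho>));
         cyc = (SOME w. w \<noteq> [] \<and> foldl \<delta> t w = t \<and> visited \<delta> t w = T')
     in pth @ cyc))"

fun Lw :: "(nat \<Rightarrow> 'x) \<Rightarrow> nat \<Rightarrow> 'x list" where
  "Lw x 0 = []"
| "Lw x (Suc s) = Lw x s @ wd x s (foldl \<delta> q0 (Lw x s))"

lemma wd_prop:
  assumes ts1: "ts x (Suc s) = Some \<tau>'"
    and pre: "(ts x s = None \<and> q = q0) \<or> (\<exists>\<tau>. ts x s = Some \<tau> \<and> q \<in> Tg x s)"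
  shows "\<exists>pth cyc t. wd x s q = pth @ cyc \<and> foldl \<delta> q pth = t \<and> t \<in> Tg x (Suc s) \<and>
    ((ts x s = Some \<tau>' \<and> V \<tau>' \<noteq> {}) \<longrightarrow>
       visited \<delta> q pth \<subseteq> \<psi> \<tau>' (longest_common_prefix (gss x \<tau>' s) (gss x \<tau>' (Suc s)))) \<and>
    cyc \<noteq> [] \<and> foldl \<delta> t cyc = t \<and> visited \<delta> t cyc = Tg x (Suc s)"
proof -
  define T' where "T' = Tg x (Suc s)"
  define t where "t = (SOME t. t \<in> T')"
  define R where "R = (ts x s = Some \<tau>' \<and> V \<tau>' \<noteq> {})"
  define \<rho> where "\<rho> = longest_common_prefix (gss x \<tau>' s) (gss x \<tau>' (Suc s))"
  define pth where "pth = (SOME w. foldl \<delta> q w = t \<and> (R \<longrightarrow> visited \<delta> q w \<subseteq> \<psi> \<tau>' \<rho>))"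
  define cyc where "cyc = (SOME w. w \<noteq> [] \<and> foldl \<delta> t w = t \<and> visited \<delta> t w = T')"
  have \<tau>'F: "\<tau>' \<in> F" using ts_inv[OF ts1] by blast
  have T'p: "T' \<in> CM \<delta> q0" "eq0 \<delta> (\<phi> \<tau>') T'" "T' \<noteq> {}" using Tg_props[OF ts1] unfolding T'_def by auto
  have tT: "t \<in> T'" unfolding t_def using T'p(3) by (simp add: some_in_eq)
  have exP: "\<exists>w. foldl \<delta> q w = t \<and> (R \<longrightarrow> visited \<delta> q w \<subseteq> \<psi> \<tau>' \<rho>)"
  proof (cases "ts x s = None")
    case True
    then have q: "q = q0" using pre by auto
    have "\<not> R" unfolding R_def using True by simp
    then show ?thesis using path_from_q0[OF T'p(1) tT] q by blast
  next
    case False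
    then obtain \<tau> where t0: "ts x s = Some \<tau>" and qT: "q \<in> Tg x s" using pre by auto
    have \<tau>F: "\<tau> \<in> F" using ts_inv[OF t0] by blast
    show ?thesis
    proof (cases R)
      case True
      then have e: "\<tau> = \<tau>'" and Vne: "V \<tau>' \<noteq> {}" unfolding R_def using t0 by auto
      define gs where "gs = gss x \<tau>' s"
      define gs' where "gs' = gss x \<tau>' (Suc s)"
      have gsV: "gs \<in> V \<tau>'" "gs' \<in> V \<tau>'" unfolding gs_def gs'_def using gss_props(1)[OF \<tau>'F Vne] by auto
      obtain z where z: "gs = \<rho> @ z" using longest_common_prefix_prefix1 unfolding \<rho>_def gs_def prefix_def by blast
      obtain z' where z': "gs' = \<rho> @ z'" using longest_common_prefix_prefix2 unfolding \<rho>_def gs'_def prefix_def by blast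
      have \<rho>V: "\<rho> \<in> V \<tau>'" using treeV[OF \<tau>'F] gsV z by blast
      have sub1: "\<psi> \<tau>' gs \<subseteq> \<psi> \<tau>' \<rho>" using psianti[OF \<tau>'F] gsV z by blast
      have sub2: "\<psi> \<tau>' gs' \<subseteq> \<psi> \<tau>' \<rho>" using psianti[OF \<tau>'F] gsV z' by blast
      have "Tg x s = \<psi> \<tau>' gs" unfolding Tg_def gs_def using t0 e Vne by simp
      then have q\<rho>: "q \<in> \<psi> \<tau>' \<rho>" using qT sub1 by blast
      have "T' = \<psi> \<tau>' gs'" unfolding T'_def Tg_def gs'_def using ts1 Vne by simp
      then have t\<rho>: "t \<in> \<psi> \<tau>' \<rho>" using tT sub2 by blast
      obtain w where "w \<noteq> [] \<and> foldl \<delta> q w = t \<and> visited \<delta> q w = \<psi> \<tau>' \<rho>"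
        using CM_conn[OF psiCM[OF \<tau>'F \<rho>V] q\<rho> t\<rho>] by blast
      then show ?thesis by blast
    next
      case False
      have Tp: "Tg x s \<in> CM \<delta> q0" "eq0 \<delta> (\<phi> \<tau>) (Tg x s)" using Tg_props[OF t0] by auto
      have l1: "le0 \<delta> (Tg x s) (\<phi> \<tau>)" using Tp(2) unfolding eq0_def by blast
      have l2: "le0 \<delta> (\<phi> \<tau>) (\<phi> \<tau>')"
      proof -
        have "ts x (Suc s) = Some \<tau> \<or> (\<exists>i. ts x (Suc s) = Some (\<tau> @ [i]))" using ts_step[OF t0] .
        then show ?thesis
        proof
          assume "ts x (Suc s) = Some \<tau>" then show ?thesis using ts1 le0_refl by simp
        next
          assume "\<exists>i. ts x (Suc s) = Some (\<tau> @ [i])"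
          then obtain i where "\<tau>' = \<tau> @ [i]" using ts1 by auto
          then show ?thesis using phimono[OF \<tau>F] \<tau>'F by simp
        qed
      qed
      have l3: "le0 \<delta> (\<phi> \<tau>') T'" using T'p(2) unfolding eq0_def by blast
      have "le0 \<delta> (Tg x s) T'" using le0_trans[OF le0_trans[OF l1 l2] l3] .
      then obtain w where "foldl \<delta> q w = t" using path_exists[OF Tp(1) _ qT tT] by blast
      then show ?thesis using False by blast
    qed
  qed
  have pthp: "foldl \<delta> q pth = t \<and> (R \<longrightarrow> visited \<delta> q pth \<subseteq> \<psi> \<tau>' \<rho>)"
    unfolding pth_def using someI_ex[OF exP] .
  have exC: "\<exists>w. w \<noteq> [] \<and> foldl \<delta> t w = t \<and> visited \<delta> t w = T'"
    using CM_conn[OF T'p(1) tT tT] .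
  have cycp: "cyc \<noteq> [] \<and> foldl \<delta> t cyc = t \<and> visited \<delta> t cyc = T'"
    unfolding cyc_def using someI_ex[OF exC] .
  have "wd x s q = pth @ cyc"
    unfolding wd_def ts1 pth_def cyc_def t_def T'_def R_def \<rho>_def Let_def by simp
  then show ?thesis using pthp cycp tT unfolding R_def \<rho>_def T'_def by blast
qed

lemma Lw_inv: "(ts x s = None \<longrightarrow> Lw x s = []) \<and> (\<forall>\<tau>. ts x s = Some \<tau> \<longrightarrow> foldl \<delta> q0 (Lw x s) \<in> Tg x s)"
proof (induction s)
  case 0 then show ?case by simp
next
  case (Suc s)
  show ?case
  proof (cases "ts x (Suc s)")
    case None
    then have n0: "ts x s = None" by (rule ts_None_prev)
    have w0: "wd x s q = []" for q unfolding wd_def using None by simp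
    show ?thesis using Suc None n0 w0 by simp
  next
    case (Some \<tau>')
    have pre: "(ts x s = None \<and> foldl \<delta> q0 (Lw x s) = q0) \<or>
       (\<exists>\<tau>. ts x s = Some \<tau> \<and> foldl \<delta> q0 (Lw x s) \<in> Tg x s)"
      using Suc by (cases "ts x s") auto
    obtain pth cyc t where w: "wd x s (foldl \<delta> q0 (Lw x s)) = pth @ cyc"
      "foldl \<delta> (foldl \<delta> q0 (Lw x s)) pth = t" "t \<in> Tg x (Suc s)" "foldl \<delta> t cyc = t"
      using wd_prop[OF Some pre] by blast
    then show ?thesis using Some by simp
  qed
qed

lemma wd_at:
  assumes "ts x (Suc s) = Some \<tau>'"
  shows "\<exists>pth cyc t. wd x s (foldl \<delta> q0 (Lw x s)) = pth @ cyc \<and> foldl \<delta> (foldl \<delta> q0 (Lw x s)) pth = t \<and>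
    ((ts x s = Some \<tau>' \<and> V \<tau>' \<noteq> {}) \<longrightarrow>
       visited \<delta> (foldl \<delta> q0 (Lw x s)) pth \<subseteq> \<psi> \<tau>' (longest_common_prefix (gss x \<tau>' s) (gss x \<tau>' (Suc s)))) \<and>
    cyc \<noteq> [] \<and> foldl \<delta> t cyc = t \<and> visited \<delta> t cyc = Tg x (Suc s)"
proof -
  have pre: "(ts x s = None \<and> foldl \<delta> q0 (Lw x s) = q0) \<or>
       (\<exists>\<tau>. ts x s = Some \<tau> \<and> foldl \<delta> q0 (Lw x s) \<in> Tg x s)"
    using Lw_inv[of x s] by (cases "ts x s") auto
  show ?thesis using wd_prop[OF assms pre] by blast
qed

lemma Tg_agree:
  assumes "\<forall>i<s. \<eta> i = x i"
  shows "Tg \<eta> s = Tg x s"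
proof -
  have e1: "ts \<eta> s = ts x s" using ts_agree[OF assms] .
  have e2: "gss \<eta> \<tau> s = gss x \<tau> s" for \<tau> using gss_agree[OF assms] .
  show ?thesis unfolding Tg_def by (simp only: e1 e2)
qed

lemma wd_agree:
  assumes "\<forall>i<Suc s. \<eta> i = x i"
  shows "wd \<eta> s q = wd x s q"
proof -
  have a0: "\<forall>i<s. \<eta> i = x i" using assms by simp
  have e1: "ts \<eta> (Suc s) = ts x (Suc s)" using ts_agree[OF assms] .
  have e2: "ts \<eta> s = ts x s" using ts_agree[OF a0] .
  have e3: "Tg \<eta> (Suc s) = Tg x (Suc s)" using Tg_agree[OF assms] .
  have e4: "gss \<eta> \<tau> s = gss x \<tau> s" for \<tau> using gss_agree[OF a0] .
  have e5: "gss \<eta> \<tau> (Suc s) = gss x \<tau> (Suc s)" for \<tau> using gss_agree[OF assms] .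
  show ?thesis unfolding wd_def by (simp only: e1 e2 e3 e4 e5)
qed

lemma Lw_agree: "(\<forall>i<s. \<eta> i = x i) \<Longrightarrow> Lw \<eta> s = Lw x s"
proof (induction s)
  case 0 then show ?case by simp
next
  case (Suc s)
  have "Lw \<eta> s = Lw x s" using Suc by simp
  then show ?case using wd_agree[OF Suc.prems] by simp
qed

lemma Lw_prefix: "s \<le> t \<Longrightarrow> prefix (Lw x s) (Lw x t)"
proof (induction t rule: dec_induct)
  case base then show ?case by simp
next
  case (step n) then show ?case by (auto intro: prefix_order.trans)
qed

end


lemma visited_append: "visited \<delta> q (a @ b) = visited \<delta> q a \<union> visited \<delta> (foldl \<delta> q a) b"
proof
  show "visited \<delta> q (a @ b) \<subseteq> visited \<delta> q a \<union> visited \<delta> (foldl \<delta> q a) b"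
  proof
    fix y assume "y \<in> visited \<delta> q (a @ b)"
    then obtain j where j: "1 \<le> j" "j \<le> length (a @ b)" "y = foldl \<delta> q (take j (a @ b))"
      unfolding visited_def by blast
    show "y \<in> visited \<delta> q a \<union> visited \<delta> (foldl \<delta> q a) b"
    proof (cases "j \<le> length a")
      case True
      then have "y = foldl \<delta> q (take j a)" using j by simp
      then show ?thesis using j(1) True unfolding visited_def by blast
    next
      case False
      then have "y = foldl \<delta> (foldl \<delta> q a) (take (j - length a) b)" using j by simp
      moreover have "1 \<le> j - length a" "j - length a \<le> length b" using False j by auto
      ultimately show ?thesis unfolding visited_def by blast
    qed
  qed
  show "visited \<delta> q a \<union> visited \<delta> (foldl \<delta> q a) b \<subseteq> visited \<delta> q (a @ b)"
  proof
    fix y assume "y \<in> visited \<delta> q a \<union> visited \<delta> (foldl \<delta> q a) b"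
    then show "y \<in> visited \<delta> q (a @ b)"
    proof
      assume "y \<in> visited \<delta> q a"
      then obtain j where j: "1 \<le> j" "j \<le> length a" "y = foldl \<delta> q (take j a)"
        unfolding visited_def by blast
      then have "y = foldl \<delta> q (take j (a @ b))" by simp
      then show ?thesis using j unfolding visited_def by fastforce
    next
      assume "y \<in> visited \<delta> (foldl \<delta> q a) b"
      then obtain j where j: "1 \<le> j" "j \<le> length b" "y = foldl \<delta> (foldl \<delta> q a) (take j b)"
        unfolding visited_def by blast
      then have "y = foldl \<delta> q (take (length a + j) (a @ b))" by simp
      moreover have "1 \<le> length a + j" "length a + j \<le> length (a @ b)" using j by auto
      ultimately show ?thesis unfolding visited_def by blast
    qed
  qed
qed

lemma prefix_nth': "prefix a b \<Longrightarrow> i < length a \<Longrightarrow> a ! i = b ! i"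
  unfolding prefix_def by (auto simp: nth_append)

context L4 begin

definition gg :: "(nat \<Rightarrow> 'x) \<Rightarrow> (nat \<Rightarrow> 'x)" where
  "gg x i = Lw x (SOME s. i < length (Lw x s)) ! i"

lemma Lw_len_grow:
  assumes "\<forall>s\<ge>N. ts x s \<noteq> None"
  shows "k \<le> length (Lw x (N + k))"
proof (induction k)
  case 0 then show ?case by simp
next
  case (Suc k)
  obtain \<tau>' where t: "ts x (Suc (N + k)) = Some \<tau>'" using assms by fastforce
  obtain pth cyc where w: "wd x (N + k) (foldl \<delta> q0 (Lw x (N + k))) = pth @ cyc" "cyc \<noteq> []"
    using wd_at[OF t] by blast
  have "0 < length cyc" using w(2) by simp
  moreover have "length (Lw x (N + Suc k)) = length (Lw x (N + k)) + length pth + length cyc"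
    using w(1) by simp
  ultimately show ?case using Suc.IH by linarith
qed

lemma Lw_len_mono: "s \<le> t \<Longrightarrow> length (Lw x s) \<le> length (Lw x t)"
  using Lw_prefix prefix_length_le by blast

lemma Lw_unbounded: "\<exists>s. i < length (Lw x s)"
proof -
  obtain \<tau> N where "\<forall>s\<ge>N. ts x s = Some \<tau>" using ts_limit[of x] by blast
  then have "\<forall>s\<ge>N. ts x s \<noteq> None" by simp
  then have "Suc i \<le> length (Lw x (N + Suc i))" by (rule Lw_len_grow)
  then show ?thesis by (intro exI[of _ "N + Suc i"]) simp
qed

lemma gg_eq: "i < length (Lw x s) \<Longrightarrow> gg x i = Lw x s ! i"
proof -
  assume a: "i < length (Lw x s)"
  define s' where "s' = (SOME s. i < length (Lw x s))"
  have b: "i < length (Lw x s')" unfolding s'_def using someI_ex[OF Lw_unbounded[of i x]] .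
  have "Lw x s' ! i = Lw x s ! i"
  proof (cases "s' \<le> s")
    case True then show ?thesis using prefix_nth'[OF Lw_prefix[OF True] b] by simp
  next
    case False then show ?thesis using prefix_nth'[OF Lw_prefix[of s s'] a] by simp
  qed
  then show ?thesis unfolding gg_def s'_def[symmetric] by simp
qed

lemma gg_cont: "cont_w gg"
  unfolding cont_w_def
proof (intro allI)
  fix \<xi> :: "nat \<Rightarrow> 'x" and n :: nat
  obtain s where s: "n < length (Lw \<xi> s)" using Lw_unbounded by blast
  have "\<forall>\<eta>. (\<forall>i<s. \<eta> i = \<xi> i) \<longrightarrow> (\<forall>i<n. gg \<eta> i = gg \<xi> i)"
  proof (intro allI impI)
    fix \<eta> i assume ag: "\<forall>i<s. \<eta> i = \<xi> i" and i: "i < n"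
    have e: "Lw \<eta> s = Lw \<xi> s" using Lw_agree[OF ag] .
    have "gg \<eta> i = Lw \<eta> s ! i" using gg_eq[of i \<eta> s] e s i by simp
    also have "\<dots> = gg \<xi> i" using gg_eq[of i \<xi> s] e s i by simp
    finally show "gg \<eta> i = gg \<xi> i" .
  qed
  then show "\<exists>m. \<forall>\<eta>. (\<forall>i<m. \<eta> i = \<xi> i) \<longrightarrow> (\<forall>i<n. gg \<eta> i = gg \<xi> i)" by blast
qed

lemma run_gg: "n \<le> length (Lw x s) \<Longrightarrow> run \<delta> q0 (gg x) n = foldl \<delta> q0 (take n (Lw x s))"
proof -
  assume n: "n \<le> length (Lw x s)"
  have "map (gg x) [0..<n] = take n (Lw x s)"
  proof (rule nth_equalityI)
    show "length (map (gg x) [0..<n]) = length (take n (Lw x s))" using n by simp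
    fix i assume "i < length (map (gg x) [0..<n])"
    then have i: "i < n" by simp
    then have "gg x i = Lw x s ! i" using gg_eq[of i x s] n by simp
    then show "map (gg x) [0..<n] ! i = take n (Lw x s) ! i" using i by simp
  qed
  then show ?thesis using run_foldl[of \<delta> q0 "gg x" n] by simp
qed

lemma main_x: "B x = A (fM \<delta> q0 (gg x))"
proof -
  obtain \<tau> N1 where h1: "\<tau> \<in> F \<and> (\<forall>s\<ge>N1. ts x s = Some \<tau>) \<and> x \<in> Util F U \<tau>"
    using ts_limit[of x] by (elim exE)
  have \<tau>F: "\<tau> \<in> F" and tsN: "\<forall>s\<ge>N1. ts x s = Some \<tau>" and xU: "x \<in> Util F U \<tau>"
    using h1 by simp_all
  from gss_limit[OF \<tau>F xU] obtain \<sigma>0 where \<sigma>0V: "\<sigma>0 \<in> V \<tau>" and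
    h: "x \<in> BB \<tau> \<sigma>0 \<and> (\<forall>i. \<sigma>0 @ [i] \<in> V \<tau> \<longrightarrow> x \<notin> BB \<tau> (\<sigma>0 @ [i])) \<and>
     (\<exists>N. \<forall>s\<ge>N. prefix \<sigma>0 (gss x \<tau> s)) \<and> (\<forall>m. \<exists>s\<ge>m. gss x \<tau> s = \<sigma>0)"
    by (rule bexE)
  have x\<sigma>0: "x \<in> BB \<tau> \<sigma>0" using h by (rule conjunct1)
  have leaf: "\<forall>i. \<sigma>0 @ [i] \<in> V \<tau> \<longrightarrow> x \<notin> BB \<tau> (\<sigma>0 @ [i])" using h by (elim conjE)
  have io: "\<forall>m. \<exists>s\<ge>m. gss x \<tau> s = \<sigma>0" using h by (elim conjE)
  have "\<exists>N. \<forall>s\<ge>N. prefix \<sigma>0 (gss x \<tau> s)" using h by (elim conjE)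
  then obtain N2 where N2: "\<forall>s\<ge>N2. prefix \<sigma>0 (gss x \<tau> s)" by (elim exE)
  have Vne: "V \<tau> \<noteq> {}" using \<sigma>0V by auto
  define S0 where "S0 = max N1 N2"
  define \<psi>0 where "\<psi>0 = \<psi> \<tau> \<sigma>0"
  define qq where "qq s = foldl \<delta> q0 (Lw x s)" for s
  have notN: "\<forall>s\<ge>N1. ts x s \<noteq> None" using tsN by simp
  have grow: "m \<le> length (Lw x s)" if "s \<ge> N1 + m" for m s
    using Lw_len_grow[OF notN, of m] Lw_len_mono[OF that, of x] by simp
  have gsub: "\<psi> \<tau> (gss x \<tau> s) \<subseteq> \<psi>0" if sS0: "s \<ge> S0" for s
  proof -
    obtain z where z: "gss x \<tau> s = \<sigma>0 @ z" using N2 sS0 unfolding S0_def prefix_def by auto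
    show ?thesis using psianti[OF \<tau>F, of \<sigma>0 z] gss_props(1)[OF \<tau>F Vne, of x s] z
      unfolding \<psi>0_def by simp
  qed
  have wdparts: "\<exists>pth cyc t. wd x s (qq s) = pth @ cyc \<and> foldl \<delta> (qq s) pth = t \<and>
      visited \<delta> (qq s) pth \<subseteq> \<psi>0 \<and> cyc \<noteq> [] \<and> foldl \<delta> t cyc = t \<and>
      visited \<delta> t cyc = \<psi> \<tau> (gss x \<tau> (Suc s))" if sS: "s \<ge> S0" for s
  proof -
    have t1: "ts x (Suc s) = Some \<tau>" and t0: "ts x s = Some \<tau>" using tsN sS unfolding S0_def by auto
    obtain pth cyc t where w: "wd x s (qq s) = pth @ cyc" "foldl \<delta> (qq s) pth = t"
      "visited \<delta> (qq s) pth \<subseteq> \<psi> \<tau> (longest_common_prefix (gss x \<tau> s) (gss x \<tau> (Suc s)))"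
      "cyc \<noteq> []" "foldl \<delta> t cyc = t" "visited \<delta> t cyc = Tg x (Suc s)"
      using wd_at[OF t1] t0 Vne unfolding qq_def by blast
    define \<rho> where "\<rho> = longest_common_prefix (gss x \<tau> s) (gss x \<tau> (Suc s))"
    have "prefix \<sigma>0 (gss x \<tau> s)" "prefix \<sigma>0 (gss x \<tau> (Suc s))" using N2 sS unfolding S0_def by auto
    then have "prefix \<sigma>0 \<rho>" unfolding \<rho>_def by (rule longest_common_prefix_max_prefix)
    then obtain z where z: "\<rho> = \<sigma>0 @ z" unfolding prefix_def by blast
    obtain z2 where z2: "gss x \<tau> s = \<rho> @ z2"
      using longest_common_prefix_prefix1 unfolding \<rho>_def prefix_def by blast
    have "\<rho> \<in> V \<tau>" using treeV[OF \<tau>F] gss_props(1)[OF \<tau>F Vne, of x s] z2 by metis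
    then have "\<psi> \<tau> \<rho> \<subseteq> \<psi>0" unfolding \<psi>0_def using psianti[OF \<tau>F] z by blast
    moreover have "Tg x (Suc s) = \<psi> \<tau> (gss x \<tau> (Suc s))" unfolding Tg_def using t1 Vne by simp
    ultimately show ?thesis using w unfolding \<rho>_def by blast
  qed
  have wdsub: "visited \<delta> (qq s) (wd x s (qq s)) \<subseteq> \<psi>0" if sS: "s \<ge> S0" for s
  proof -
    obtain pth cyc t where w: "wd x s (qq s) = pth @ cyc" "foldl \<delta> (qq s) pth = t"
      "visited \<delta> (qq s) pth \<subseteq> \<psi>0" "visited \<delta> t cyc = \<psi> \<tau> (gss x \<tau> (Suc s))"
      using wdparts[OF sS] by blast
    have "\<psi> \<tau> (gss x \<tau> (Suc s)) \<subseteq> \<psi>0" using gsub sS by simp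
    then show ?thesis using w visited_append[of \<delta> "qq s" pth cyc] by auto
  qed
  have late: "\<forall>n. length (Lw x S0) < n \<and> n \<le> length (Lw x s) \<longrightarrow> foldl \<delta> q0 (take n (Lw x s)) \<in> \<psi>0"
    if "s \<ge> S0" for s
    using that
  proof (induction s rule: dec_induct)
    case base then show ?case by auto
  next
    case (step s)
    show ?case
    proof (intro allI impI)
      fix n assume n: "length (Lw x S0) < n \<and> n \<le> length (Lw x (Suc s))"
      show "foldl \<delta> q0 (take n (Lw x (Suc s))) \<in> \<psi>0"
      proof (cases "n \<le> length (Lw x s)")
        case True
        then show ?thesis using step.IH n by simp
      next
        case False
        define w where "w = wd x s (qq s)"
        have L: "Lw x (Suc s) = Lw x s @ w" unfolding w_def qq_def by simp
        define j where "j = n - length (Lw x s)"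
        have j: "1 \<le> j" "j \<le> length w" using False n L unfolding j_def by auto
        have eq: "foldl \<delta> q0 (take n (Lw x (Suc s))) = foldl \<delta> (qq s) (take j w)"
          using False unfolding L j_def qq_def by simp
        have vis: "foldl \<delta> (qq s) (take j w) \<in> visited \<delta> (qq s) w"
          using j unfolding visited_def by blast
        have sub: "visited \<delta> (qq s) w \<subseteq> \<psi>0" unfolding w_def by (rule wdsub[OF step.hyps(1)])
        have "foldl \<delta> (qq s) (take j w) \<in> \<psi>0" using subsetD[OF sub vis] .
        then show ?thesis unfolding eq .
      qed
    qed
  qed
  have sub: "fM \<delta> q0 (gg x) \<subseteq> \<psi>0"
  proof
    fix q assume "q \<in> fM \<delta> q0 (gg x)"
    then obtain n where n: "n > length (Lw x S0)" "run \<delta> q0 (gg x) n = q"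
      using fM_INFM by metis
    define s where "s = S0 + N1 + n"
    have ns: "n \<le> length (Lw x s)" using grow[of n s] unfolding s_def by simp
    have "q = foldl \<delta> q0 (take n (Lw x s))" using run_gg[OF ns] n by simp
    then show "q \<in> \<psi>0" using late[of s] ns n unfolding s_def by auto
  qed
  have sup: "\<psi>0 \<subseteq> fM \<delta> q0 (gg x)"
  proof
    fix q assume q: "q \<in> \<psi>0"
    have "\<forall>m. \<exists>n>m. run \<delta> q0 (gg x) n = q"
    proof
      fix m
      obtain s' where s': "s' \<ge> Suc (S0 + N1 + m)" "gss x \<tau> s' = \<sigma>0" using io by blast
      define s where "s = s' - 1"
      have ss: "s' = Suc s" "s \<ge> S0" "s \<ge> N1 + m" using s' unfolding s_def by auto
      obtain pth cyc t where w: "wd x s (qq s) = pth @ cyc" "foldl \<delta> (qq s) pth = t"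
        "visited \<delta> t cyc = \<psi> \<tau> (gss x \<tau> (Suc s))"
        using wdparts[OF ss(2)] by blast
      have "q \<in> visited \<delta> t cyc" using w(3) s' ss q unfolding \<psi>0_def by simp
      then obtain j where j: "1 \<le> j" "j \<le> length cyc" "q = foldl \<delta> t (take j cyc)"
        unfolding visited_def by blast
      define n where "n = length (Lw x s) + length pth + j"
      have L: "Lw x (Suc s) = Lw x s @ pth @ cyc" using w(1) unfolding qq_def by simp
      have nle: "n \<le> length (Lw x (Suc s))" unfolding n_def L using j by simp
      have "m \<le> length (Lw x s)" using grow ss by simp
      then have nm: "n > m" unfolding n_def using j by simp
      have "take n (Lw x (Suc s)) = Lw x s @ pth @ take j cyc" unfolding L n_def by simp
      then have "run \<delta> q0 (gg x) n = q"
        using run_gg[OF nle] w(2) j(3) unfolding qq_def by simp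
      then show "\<exists>n>m. run \<delta> q0 (gg x) n = q" using nm by blast
    qed
    then show "q \<in> fM \<delta> q0 (gg x)" using fM_INFM by metis
  qed
  have "B x = lab \<tau> \<sigma>0" using det[OF \<tau>F \<sigma>0V xU x\<sigma>0 leaf] .
  also have "\<dots> = A \<psi>0" unfolding \<psi>0_def using labA[OF \<tau>F \<sigma>0V] .
  also have "\<psi>0 = fM \<delta> q0 (gg x)" using sub sup by blast
  finally show ?thesis .
qed

theorem L4_main: "\<exists>g. cont_w g \<and> (\<forall>x. B x = A (fM \<delta> q0 (g x)))"
  using gg_cont main_x by blast

end


theorem lemma4p7:
  fixes \<delta> :: "'q::finite \<Rightarrow> 'x::finite \<Rightarrow> 'q" and q0 :: 'q
    and A :: "'q set \<Rightarrow> nat" and k :: nat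
    and F :: "nat list set" and c :: "nat list \<Rightarrow> nat list set \<times> (nat list \<Rightarrow> nat)"
    and B :: "(nat \<Rightarrow> 'x) \<Rightarrow> nat"
  assumes "card (UNIV :: 'x set) \<ge> 2"
    and "k \<ge> 2"
    and "\<forall>C\<in>CM \<delta> q0. A C < k"
    and "labeled_forest k F c"
    and "h_red F c \<delta> q0 A"
    and "B \<in> SigmaF k F c"
  shows "le_CA B (A \<circ> fM \<delta> q0)"
proof -
  have forest: "is_forest F" and trees: "\<And>\<tau>. \<tau> \<in> F \<Longrightarrow> is_tree (fst (c \<tau>))"
    using assms(4) unfolding labeled_forest_def by auto
  obtain \<phi> :: "nat list \<Rightarrow> 'q set" where \<phi>1: "\<forall>\<tau>\<in>F. \<phi> \<tau> \<in> CM \<delta> q0"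
    and \<phi>2: "\<forall>\<tau>\<in>F. \<forall>\<tau>'\<in>F. prefix \<tau> \<tau>' \<longrightarrow> le0 \<delta> (\<phi> \<tau>) (\<phi> \<tau>')"
    and \<phi>3: "\<forall>\<tau>\<in>F. \<exists>\<psi> :: nat list \<Rightarrow> 'q set.
           (\<forall>\<sigma>\<in>fst (c \<tau>). \<psi> \<sigma> \<in> cls0 \<delta> q0 (\<phi> \<tau>)) \<and>
           (\<forall>\<sigma>\<in>fst (c \<tau>). \<forall>\<sigma>'\<in>fst (c \<tau>). prefix \<sigma> \<sigma>' \<longrightarrow> \<psi> \<sigma> \<supseteq> \<psi> \<sigma>') \<and>
           (\<forall>\<sigma>\<in>fst (c \<tau>). snd (c \<tau>) \<sigma> = A (\<psi> \<sigma>))"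
    using assms(5) unfolding h_red_def by blast
  obtain \<Psi> :: "nat list \<Rightarrow> nat list \<Rightarrow> 'q set" where \<Psi>: "\<forall>\<tau>\<in>F.
           (\<forall>\<sigma>\<in>fst (c \<tau>). \<Psi> \<tau> \<sigma> \<in> cls0 \<delta> q0 (\<phi> \<tau>)) \<and>
           (\<forall>\<sigma>\<in>fst (c \<tau>). \<forall>\<sigma>'\<in>fst (c \<tau>). prefix \<sigma> \<sigma>' \<longrightarrow> \<Psi> \<tau> \<sigma> \<supseteq> \<Psi> \<tau> \<sigma>') \<and>
           (\<forall>\<sigma>\<in>fst (c \<tau>). snd (c \<tau>) \<sigma> = A (\<Psi> \<tau> \<sigma>))"
    using bchoice[OF \<phi>3] by blast
  obtain U W where FF: "F_family F c U W" and dt: "determines F c W B"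
    using assms(6) unfolding SigmaF_def by blast
  have openU: "\<forall>\<tau>\<in>F. open_w (U \<tau>)"
    using FF unfolding F_family_def by (elim conjE) assumption
  have coverU: "\<Union>(U ` F) = UNIV"
    using FF unfolding F_family_def by (elim conjE) assumption
  have bsx: "\<forall>\<tau>\<in>F. \<exists>Bs :: nat list \<Rightarrow> (nat \<Rightarrow> 'x) set.
        (\<forall>\<sigma>\<in>fst (c \<tau>). Bs \<sigma> \<in> Sigma02 \<and> W \<tau> \<sigma> = Util F U \<tau> \<inter> Bs \<sigma>) \<and>
        (\<forall>\<sigma>\<in>fst (c \<tau>). \<forall>i. \<sigma> @ [i] \<in> fst (c \<tau>) \<longrightarrow> W \<tau> (\<sigma> @ [i]) \<subseteq> W \<tau> \<sigma>) \<and>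
        \<Union>(W \<tau> ` fst (c \<tau>)) = Util F U \<tau>"
    using FF unfolding F_family_def by (elim conjE) assumption
  obtain Bsf :: "nat list \<Rightarrow> nat list \<Rightarrow> (nat \<Rightarrow> 'x) set" where Bsf: "\<forall>\<tau>\<in>F.
        (\<forall>\<sigma>\<in>fst (c \<tau>). Bsf \<tau> \<sigma> \<in> Sigma02 \<and> W \<tau> \<sigma> = Util F U \<tau> \<inter> Bsf \<tau> \<sigma>) \<and>
        (\<forall>\<sigma>\<in>fst (c \<tau>). \<forall>i. \<sigma> @ [i] \<in> fst (c \<tau>) \<longrightarrow> W \<tau> (\<sigma> @ [i]) \<subseteq> W \<tau> \<sigma>) \<and>
        \<Union>(W \<tau> ` fst (c \<tau>)) = Util F U \<tau>"
    using bchoice[OF bsx] by blast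
  define Cs :: "nat list \<Rightarrow> nat list \<Rightarrow> nat \<Rightarrow> (nat \<Rightarrow> 'x) set" where
    "Cs \<tau> \<sigma> = (SOME Cs. (\<forall>n. closed_w (Cs n)) \<and> Bsf \<tau> \<sigma> = \<Union>(range Cs))" for \<tau> \<sigma>
  have CsP: "(\<forall>n. closed_w (Cs \<tau> \<sigma> n)) \<and> Bsf \<tau> \<sigma> = \<Union>(range (Cs \<tau> \<sigma>))"
    if "\<tau> \<in> F" "\<sigma> \<in> fst (c \<tau>)" for \<tau> \<sigma>
  proof -
    have "Bsf \<tau> \<sigma> \<in> Sigma02" using Bsf that by blast
    then have "\<exists>Cs :: nat \<Rightarrow> (nat \<Rightarrow> 'x) set. (\<forall>n. closed_w (Cs n)) \<and> Bsf \<tau> \<sigma> = \<Union>(range Cs)"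
      unfolding Sigma02_def by blast
    then show ?thesis unfolding Cs_def by (rule someI_ex)
  qed
  have WB: "W \<tau> \<sigma> = Util F U \<tau> \<inter> \<Union>(range (Cs \<tau> \<sigma>))" if "\<tau> \<in> F" "\<sigma> \<in> fst (c \<tau>)" for \<tau> \<sigma>
    using Bsf CsP[OF that] that by auto
  have tree_pc: "\<rho> \<in> fst (c \<tau>)" if "\<tau> \<in> F" "\<rho> @ z \<in> fst (c \<tau>)" for \<tau> \<rho> z
    using trees[OF that(1)] that(2) unfolding is_tree_def by blast
  have loc: "L4 \<delta> q0 F (\<lambda>\<tau>. fst (c \<tau>)) (\<lambda>\<tau> \<sigma>. snd (c \<tau>) \<sigma>) U Cs \<phi> \<Psi> A B"
  proof (unfold_locales)
    show "finite F" using forest unfolding is_forest_def by blast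
    show "\<And>\<tau>. \<tau> \<in> F \<Longrightarrow> finite (fst (c \<tau>))" using trees unfolding is_tree_def by blast
    show "\<And>\<tau> \<rho> z. \<tau> \<in> F \<Longrightarrow> \<rho> @ z \<in> fst (c \<tau>) \<Longrightarrow> \<rho> \<in> fst (c \<tau>)" by (rule tree_pc)
    show "\<And>\<tau>. \<tau> \<in> F \<Longrightarrow> open_w (U \<tau>)" using openU by blast
    show "\<Union>(U ` F) = UNIV" by (rule coverU)
    show "\<And>\<tau> \<sigma> n. \<tau> \<in> F \<Longrightarrow> \<sigma> \<in> fst (c \<tau>) \<Longrightarrow> closed_w (Cs \<tau> \<sigma> n)" using CsP by blast
    show "x \<in> \<Union>(range (Cs \<tau> \<sigma>))"
      if "\<tau> \<in> F" "\<sigma> @ [i] \<in> fst (c \<tau>)" "x \<in> Util F U \<tau>" "x \<in> \<Union>(range (Cs \<tau> (\<sigma> @ [i])))"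
      for \<tau> \<sigma> i x
    proof -
      have sV: "\<sigma> \<in> fst (c \<tau>)" using tree_pc that(1,2) by blast
      have "x \<in> W \<tau> (\<sigma> @ [i])" using WB[OF that(1,2)] that(3,4) by blast
      moreover have "W \<tau> (\<sigma> @ [i]) \<subseteq> W \<tau> \<sigma>" using Bsf that(1,2) sV by blast
      ultimately show ?thesis using WB[OF that(1) sV] by blast
    qed
    show "\<exists>\<sigma>\<in>fst (c \<tau>). x \<in> \<Union>(range (Cs \<tau> \<sigma>))" if t1: "\<tau> \<in> F" and t2: "x \<in> Util F U \<tau>" for \<tau> x
    proof -
      have "\<Union>(W \<tau> ` fst (c \<tau>)) = Util F U \<tau>" using Bsf t1 by blast
      then obtain \<sigma> where "\<sigma> \<in> fst (c \<tau>)" "x \<in> W \<tau> \<sigma>" using t2 by blast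
      then show ?thesis using WB[OF t1] by blast
    qed
    show "B x = snd (c \<tau>) \<sigma>"
      if "\<tau> \<in> F" "\<sigma> \<in> fst (c \<tau>)" "x \<in> Util F U \<tau>" "x \<in> \<Union>(range (Cs \<tau> \<sigma>))"
        "\<forall>i. \<sigma> @ [i] \<in> fst (c \<tau>) \<longrightarrow> x \<notin> \<Union>(range (Cs \<tau> (\<sigma> @ [i])))" for \<tau> \<sigma> x
    proof -
      have "x \<in> W \<tau> \<sigma>" using WB[OF that(1,2)] that(3,4) by blast
      moreover have "x \<notin> \<Union>{W \<tau> (\<sigma> @ [i]) | i. \<sigma> @ [i] \<in> fst (c \<tau>)}"
        using WB[OF that(1)] that(5) by blast
      ultimately show ?thesis using dt that(1,2) unfolding determines_def by blast
    qed
    show "\<And>\<tau>. \<tau> \<in> F \<Longrightarrow> \<phi> \<tau> \<in> CM \<delta> q0" using \<phi>1 by blast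
    show "\<And>\<tau> i. \<tau> \<in> F \<Longrightarrow> \<tau> @ [i] \<in> F \<Longrightarrow> le0 \<delta> (\<phi> \<tau>) (\<phi> (\<tau> @ [i]))" using \<phi>2 by simp
    show "\<And>\<tau> \<sigma>. \<tau> \<in> F \<Longrightarrow> \<sigma> \<in> fst (c \<tau>) \<Longrightarrow> \<Psi> \<tau> \<sigma> \<in> CM \<delta> q0" using \<Psi> unfolding cls0_def by blast
    show "\<And>\<tau> \<sigma>. \<tau> \<in> F \<Longrightarrow> \<sigma> \<in> fst (c \<tau>) \<Longrightarrow> eq0 \<delta> (\<phi> \<tau>) (\<Psi> \<tau> \<sigma>)" using \<Psi> unfolding cls0_def by blast
    show "\<Psi> \<tau> (\<sigma> @ z) \<subseteq> \<Psi> \<tau> \<sigma>" if "\<tau> \<in> F" "\<sigma> @ z \<in> fst (c \<tau>)" for \<tau> \<sigma> z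
    proof -
      have "\<sigma> \<in> fst (c \<tau>)" using tree_pc that by blast
      then show ?thesis using \<Psi> that by simp
    qed
    show "\<And>\<tau> \<sigma>. \<tau> \<in> F \<Longrightarrow> \<sigma> \<in> fst (c \<tau>) \<Longrightarrow> snd (c \<tau>) \<sigma> = A (\<Psi> \<tau> \<sigma>)" using \<Psi> by blast
  qed
  obtain g where g: "cont_w g" "\<forall>x. B x = A (fM \<delta> q0 (g x))" using L4.L4_main[OF loc] by blast
  have "B = (A \<circ> fM \<delta> q0) \<circ> g" using g(2) by (simp add: fun_eq_iff)
  then show ?thesis unfolding le_CA_def using g(1) by blast
qed


end
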